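(* Let $n\ge 6$ and $U\subset V=\{1,\dotsc,n\}$ with $|U|=m$, $3\le m\le n/2$. Let $A_U$ be the matrix of the quadratic form $q_{h_U}$ on the space of polynomials of degree at most $1$ on $\mathbb{R}^{n(n-1)/2}$, in the monomial basis $\{1\}\cup\{x_{ij}\}$; identify a polynomial of degree at most $1$ with its coefficient vector in this basis. Then the following are eigenvectors of $A_U$ with the stated eigenvalues: (1) $2-\sum_{j\ne i} x_{ij}$, for any $1\le i\le n$: eigenvalue $0$; (2) $x_{ij}-x_{jf}+x_{fg}-x_{gi}$ for distinct $i,j,f,g\in U$: eigenvalue $\frac{2(m-2)}{(n-2)(m-1)}$; (3) $x_{pq}-x_{qr}+x_{rs}-x_{sp}$ for distinct $p,q,r,s\in V\setminus U$: eigenvalue $\frac{2(n-m-2)}{(n-2)(n-m-1)}$; (4) $x_{ip}-x_{iq}+x_{jq}-x_{jp}$ for distinct $i,j\in U$ and distinct $p,q\in V\setminus U$: eigenvalue $\frac{2(m(n-3)(n-m)-(n-2)^2)}{(n-2)(n-3)(m-1)(n-m-1)}$; (5) $\sum_{\ell\in U,\,\ell\ne i,j}\big(\frac{n-m}{m-2}x_{i\ell}-\frac{n-m}{m-2}x_{j\ell}\big)+\sum_{t\in V\setminus U}(-x_{it}+x_{jt})$ for distinct $i,j\in U$: eigenvalue $\frac{2(m-2)}{(n-3)(m-1)}$; (6) $\sum_{t\in V\setminus U,\,t\ne p,q}\big(\frac{m}{n-m-2}x_{pt}-\frac{m}{n-m-2}x_{qt}\big)+\sum_{\ell\in U}(-x_{p\ell}+x_{q\ell})$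 for distinct $p,q\in V\setminus U$: eigenvalue $\frac{2(n-m-2)}{(n-3)(n-m-1)}$.
   Context: Let $N=n(n-1)/2$, coordinates of $\mathbb{R}^N$ indexed by unordered pairs $\{i,j\}$ of distinct elements of $V$, written $x_{ij}=x_{ji}$. Let $X\subset\mathbb{R}^N$ be the set of incidence vectors of Hamiltonian cycles of $K_n$. For $f:X\to\mathbb{R}$, $q_f(h)=\frac{1}{|X|}\sum_{x\in X}f(x)h(x)^2$, and its matrix in the monomial basis has entry indexed by monomials $\mu,\nu$ equal to $\frac{1}{|X|}\sum_{x\in X}f(x)\mu(x)\nu(x)$. For $U\subset V$, $h_U(x)=c\big(\sum_{u\in U,v\in V\setminus U}x_{uv}-2\big)$ with $c>0$ chosen so that $h_U$ has average value $1$ on $X$. *)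

theory Defs
  imports Main "HOL-Library.Function_Algebras" Complex_Main
begin

text \<open>Vertex set V = {1..n}; coordinates indexed by 2-element subsets {i,j} of V.
  A point of R^N is represented as a function from 2-sets to reals.\<close>

definition edges :: "nat \<Rightarrow> nat set set" where
  "edges n = {{i, j} | i j. i \<in> {1..n} \<and> j \<in> {1..n} \<and> i \<noteq> j}"

definition ham_cycles :: "nat \<Rightarrow> nat set set set" where
  "ham_cycles n = {H. \<exists>\<sigma>. bij_betw \<sigma> {..<n} {1..n} \<and>
       H = (\<lambda>k. {\<sigma> k, \<sigma> (Suc k mod n)}) ` {..<n}}"

definition incidence :: "nat set set \<Rightarrow> nat set \<Rightarrow> real" where
  "incidence H = (\<lambda>e. if e \<in> H then 1 else 0)"

definition HX :: "nat \<Rightarrow> (nat set \<Rightarrow> real) set" where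
  "HX n = incidence ` ham_cycles n"

text \<open>Monomial basis of polynomials of degree at most 1: None is the constant 1,
  Some e is the coordinate x_e.\<close>
fun mon :: "nat set option \<Rightarrow> (nat set \<Rightarrow> real) \<Rightarrow> real" where
  "mon None x = 1"
| "mon (Some e) x = x e"

definition basis1 :: "nat \<Rightarrow> nat set option set" where
  "basis1 n = {None} \<union> Some ` edges n"

definition qmat :: "nat \<Rightarrow> ((nat set \<Rightarrow> real) \<Rightarrow> real) \<Rightarrow> nat set option \<Rightarrow> nat set option \<Rightarrow> real" where
  "qmat n f \<mu> \<nu> = (1 / real (card (HX n))) * (\<Sum>x\<in>HX n. f x * mon \<mu> x * mon \<nu> x)"

definition cutval :: "nat \<Rightarrow> nat set \<Rightarrow> (nat set \<Rightarrow> real) \<Rightarrow> real" where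
  "cutval n U x = (\<Sum>u\<in>U. \<Sum>v\<in>{1..n} - U. x {u, v}) - 2"

text \<open>h_U = c * cutval with c chosen so that the average of h_U on X is 1.\<close>
definition hU :: "nat \<Rightarrow> nat set \<Rightarrow> (nat set \<Rightarrow> real) \<Rightarrow> real" where
  "hU n U x = (1 / ((1 / real (card (HX n))) * (\<Sum>y\<in>HX n. cutval n U y))) * cutval n U x"

definition AU :: "nat \<Rightarrow> nat set \<Rightarrow> nat set option \<Rightarrow> nat set option \<Rightarrow> real" where
  "AU n U = qmat n (hU n U)"

definition one_v :: "nat set option \<Rightarrow> real" where
  "one_v = (\<lambda>\<mu>. if \<mu> = None then 1 else 0)"

definition xv :: "nat \<Rightarrow> nat \<Rightarrow> nat set option \<Rightarrow> real" where
  "xv i j = (\<lambda>\<mu>. if \<mu> = Some {i, j} then 1 else 0)"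

definition is_eigvec :: "nat \<Rightarrow> (nat set option \<Rightarrow> nat set option \<Rightarrow> real) \<Rightarrow> (nat set option \<Rightarrow> real) \<Rightarrow> real \<Rightarrow> bool" where
  "is_eigvec n A v lam \<longleftrightarrow>
     (\<forall>\<mu>. \<mu> \<notin> basis1 n \<longrightarrow> v \<mu> = 0) \<and> (\<exists>\<mu>\<in>basis1 n. v \<mu> \<noteq> 0) \<and>
     (\<forall>\<mu>\<in>basis1 n. (\<Sum>\<nu>\<in>basis1 n. A \<mu> \<nu> * v \<nu>) = lam * v \<mu>)"

end

theory Submission
  imports Defs "HOL-Combinatorics.Permutations"
begin

lemma suc_mod_eq: "a < n \<Longrightarrow> Suc a mod n = (if Suc a = n then 0 else Suc a)"
  by (auto simp: mod_if)

lemma ham_adj: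
  assumes bij: "bij_betw \<sigma> {..<n} {1..n}" and a: "a < n" and b: "b < n"
  shows "{\<sigma> a, \<sigma> b} \<in> (\<lambda>k. {\<sigma> k, \<sigma> (Suc k mod n)}) ` {..<n} \<longleftrightarrow>
         (b = Suc a mod n \<or> a = Suc b mod n)"
proof -
  have inj: "inj_on \<sigma> {..<n}" using bij bij_betw_def by blast
  have n0: "0 < n" using a by simp
  show ?thesis
  proof
    assume "{\<sigma> a, \<sigma> b} \<in> (\<lambda>k. {\<sigma> k, \<sigma> (Suc k mod n)}) ` {..<n}"
    then obtain k where k: "k < n" "{\<sigma> a, \<sigma> b} = {\<sigma> k, \<sigma> (Suc k mod n)}" by auto
    have sk: "Suc k mod n < n" using n0 by simp
    from k(2) have "(\<sigma> a = \<sigma> k \<and> \<sigma> b = \<sigma> (Suc k mod n)) \<or> (\<sigma> a = \<sigma> (Suc k mod n) \<and> \<sigma> b = \<sigma> k)"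
      by (auto simp: doubleton_eq_iff)
    then have "(a = k \<and> b = Suc k mod n) \<or> (a = Suc k mod n \<and> b = k)"
      using inj_onD[OF inj] a b k(1) sk by (metis lessThan_iff)
    then show "b = Suc a mod n \<or> a = Suc b mod n" by auto
  next
    assume "b = Suc a mod n \<or> a = Suc b mod n"
    then show "{\<sigma> a, \<sigma> b} \<in> (\<lambda>k. {\<sigma> k, \<sigma> (Suc k mod n)}) ` {..<n}"
    proof
      assume "b = Suc a mod n" then show ?thesis using a by auto
    next
      assume h: "a = Suc b mod n"
      have "{\<sigma> a, \<sigma> b} = {\<sigma> b, \<sigma> (Suc b mod n)}" using h by auto
      then show ?thesis using b by auto
    qed
  qed
qed

lemma ham_deg:
  assumes H: "H \<in> ham_cycles n" and n3: "3 \<le> n" and v: "v \<in> {1..n}"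
  shows "(\<Sum>w\<in>{1..n} - {v}. incidence H {v, w}) = 2"
proof -
  obtain \<sigma> where bij: "bij_betw \<sigma> {..<n} {1..n}" and HH: "H = (\<lambda>k. {\<sigma> k, \<sigma> (Suc k mod n)}) ` {..<n}"
    using H unfolding ham_cycles_def by auto
  have inj: "inj_on \<sigma> {..<n}" using bij bij_betw_def by blast
  obtain a where a: "a < n" "v = \<sigma> a" using v bij by (metis bij_betw_iff_bijections lessThan_iff)
  have img: "{1..n} - {v} = \<sigma> ` ({..<n} - {a})"
    using bij a inj by (auto simp: bij_betw_def inj_on_image_set_diff)
  have inj2: "inj_on \<sigma> ({..<n} - {a})" using inj by (auto intro: inj_on_subset)
  have "(\<Sum>w\<in>{1..n} - {v}. incidence H {v, w}) = (\<Sum>b\<in>{..<n} - {a}. incidence H {\<sigma> a, \<sigma> b})"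
    unfolding img by (simp add: sum.reindex[OF inj2] a(2))
  also have "\<dots> = (\<Sum>b\<in>{..<n} - {a}. if b = Suc a mod n \<or> a = Suc b mod n then 1 else 0)"
    by (rule sum.cong) (auto simp: incidence_def HH ham_adj[OF bij] a(1))
  also have "\<dots> = card {b \<in> {..<n} - {a}. b = Suc a mod n \<or> a = Suc b mod n}"
    by (simp add: sum.If_cases Int_def conj_commute)
  also have "{b \<in> {..<n} - {a}. b = Suc a mod n \<or> a = Suc b mod n} = {Suc a mod n, (if a = 0 then n - 1 else a - 1)}"
  proof (rule set_eqI)
    fix b
    have e1: "b < n \<Longrightarrow> (a = Suc b mod n) = (if Suc b = n then a = 0 else a = Suc b)"
      by (simp add: suc_mod_eq)
    show "b \<in> {b \<in> {..<n} - {a}. b = Suc a mod n \<or> a = Suc b mod n} \<longleftrightarrow> b \<in> {Suc a mod n, (if a = 0 then n - 1 else a - 1)}"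
      using a(1) n3 e1 by (cases "b < n") (auto simp: suc_mod_eq)
  qed
  also have "card \<dots> = 2"
    using a(1) n3 by (auto simp: suc_mod_eq split: if_splits)
  finally show ?thesis by simp
qed

lemma ham_tri:
  assumes H: "H \<in> ham_cycles n" and n4: "4 \<le> n" and "a \<in> {1..n}" "b \<in> {1..n}" "c \<in> {1..n}"
    and d: "a \<noteq> b" "b \<noteq> c" "a \<noteq> c"
  shows "\<not> ({a,b} \<in> H \<and> {b,c} \<in> H \<and> {c,a} \<in> H)"
proof -
  obtain \<sigma> where bij: "bij_betw \<sigma> {..<n} {1..n}" and HH: "H = (\<lambda>k. {\<sigma> k, \<sigma> (Suc k mod n)}) ` {..<n}"
    using H unfolding ham_cycles_def by auto
  have inj: "inj_on \<sigma> {..<n}" using bij bij_betw_def by blast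
  obtain i where i: "i < n" "a = \<sigma> i" using assms(3) bij by (metis bij_betw_iff_bijections lessThan_iff)
  obtain j where j: "j < n" "b = \<sigma> j" using assms(4) bij by (metis bij_betw_iff_bijections lessThan_iff)
  obtain k where k: "k < n" "c = \<sigma> k" using assms(5) bij by (metis bij_betw_iff_bijections lessThan_iff)
  have "i \<noteq> j" "j \<noteq> k" "i \<noteq> k" using d i j k by auto
  then show ?thesis
    unfolding HH i(2) j(2) k(2)
    unfolding ham_adj[OF bij i(1) j(1)] ham_adj[OF bij j(1) k(1)] ham_adj[OF bij k(1) i(1)]
    using i(1) j(1) k(1) n4
    by (simp add: suc_mod_eq) arith
qed

definition act :: "(nat \<Rightarrow> nat) \<Rightarrow> (nat set \<Rightarrow> real) \<Rightarrow> (nat set \<Rightarrow> real)" where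
  "act \<pi> x = (\<lambda>e. x (\<pi> ` e))"

lemma img_inv_iff:
  assumes "\<pi> permutes S"
  shows "(\<pi> ` e = A) \<longleftrightarrow> (e = inv \<pi> ` A)"
proof -
  have "inv \<pi> ` (\<pi> ` e) = e" using permutes_inv_o(2)[OF assms] by (simp add: image_comp)
  moreover have "\<pi> ` (inv \<pi> ` A) = A" using permutes_inv_o(1)[OF assms] by (simp add: image_comp)
  ultimately show ?thesis by metis
qed

lemma act_ham:
  assumes H: "H \<in> ham_cycles n" and p: "\<pi> permutes {1..n}"
  shows "act \<pi> (incidence H) \<in> HX n"
proof -
  obtain \<sigma> where bij: "bij_betw \<sigma> {..<n} {1..n}" and HH: "H = (\<lambda>k. {\<sigma> k, \<sigma> (Suc k mod n)}) ` {..<n}"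
    using H unfolding ham_cycles_def by auto
  define \<sigma>' where "\<sigma>' = inv \<pi> \<circ> \<sigma>"
  have pi: "inv \<pi> permutes {1..n}" using permutes_inv[OF p] .
  have bij': "bij_betw \<sigma>' {..<n} {1..n}"
    unfolding \<sigma>'_def by (rule bij_betw_trans[OF bij]) (rule permutes_imp_bij[OF pi])
  define H' where "H' = (\<lambda>k. {\<sigma>' k, \<sigma>' (Suc k mod n)}) ` {..<n}"
  have H'h: "H' \<in> ham_cycles n" unfolding ham_cycles_def H'_def using bij' by blast
  have "act \<pi> (incidence H) = incidence H'"
  proof
    fix e
    have "(\<pi> ` e \<in> H) \<longleftrightarrow> e \<in> H'"
    proof -
      have "(\<pi> ` e \<in> H) \<longleftrightarrow> (\<exists>k<n. \<pi> ` e = {\<sigma> k, \<sigma> (Suc k mod n)})" unfolding HH by auto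
      also have "\<dots> \<longleftrightarrow> (\<exists>k<n. e = inv \<pi> ` {\<sigma> k, \<sigma> (Suc k mod n)})" using img_inv_iff[OF p] by simp
      also have "\<dots> \<longleftrightarrow> e \<in> H'" unfolding H'_def \<sigma>'_def by auto
      finally show ?thesis .
    qed
    then show "act \<pi> (incidence H) e = incidence H' e" by (simp add: act_def incidence_def)
  qed
  then show ?thesis using H'h unfolding HX_def by auto
qed

lemma act_HX: "x \<in> HX n \<Longrightarrow> \<pi> permutes {1..n} \<Longrightarrow> act \<pi> x \<in> HX n"
  using act_ham unfolding HX_def by blast

lemma act_act: "act \<pi> (act \<rho> x) = act (\<rho> \<circ> \<pi>) x"
  by (simp add: act_def image_comp)

lemma act_inj: assumes "\<pi> permutes S" shows "inj (act \<pi>)"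
proof
  fix x y assume h: "act \<pi> x = act \<pi> y"
  show "x = y"
  proof
    fix e
    have "\<pi> ` (inv \<pi> ` e) = e" using permutes_inv_o(1)[OF assms] by (simp add: image_comp)
    then show "x e = y e" using fun_cong[OF h, of "inv \<pi> ` e"] by (simp add: act_def)
  qed
qed

lemma act_id: "act id x = x" by (simp add: act_def)

lemma act_image: assumes p: "\<pi> permutes {1..n}" shows "act \<pi> ` HX n = HX n"
proof
  show "act \<pi> ` HX n \<subseteq> HX n" using act_HX p by auto
  show "HX n \<subseteq> act \<pi> ` HX n"
  proof
    fix x assume x: "x \<in> HX n"
    have "act \<pi> (act (inv \<pi>) x) = x" using permutes_inv_o(2)[OF p] by (simp add: act_act act_id)
    moreover have "act (inv \<pi>) x \<in> HX n" using act_HX[OF x permutes_inv[OF p]] .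
    ultimately show "x \<in> act \<pi> ` HX n" by (metis image_eqI)
  qed
qed

lemma sum_act:
  assumes p: "\<pi> permutes {1..n}"
  shows "(\<Sum>x\<in>HX n. G x) = (\<Sum>x\<in>HX n. G (act \<pi> x))"
proof -
  have "(\<Sum>x\<in>HX n. G x) = (\<Sum>x\<in>act \<pi> ` HX n. G x)" using act_image[OF p] by simp
  also have "\<dots> = (\<Sum>x\<in>HX n. G (act \<pi> x))"
    by (rule sum.reindex[unfolded comp_def]) (rule inj_on_subset[OF act_inj[OF p]], simp)
  finally show ?thesis .
qed

lemma act_pair: "act \<pi> x {a, b} = x {\<pi> a, \<pi> b}" by (simp add: act_def)

locale LN =
  fixes n :: nat
  assumes n6: "6 \<le> n"
begin

abbreviation "S \<equiv> {1..n}"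
abbreviation "X \<equiv> HX n"
abbreviation "NN \<equiv> real (card (HX n))"

lemma finX: "finite X"
proof -
  have "ham_cycles n \<subseteq> Pow (Pow S)"
    unfolding ham_cycles_def by (auto simp: bij_betw_def)
  then have "finite (ham_cycles n)" by (rule finite_subset) simp
  then show ?thesis unfolding HX_def by simp
qed

lemma X_ne: "X \<noteq> {}"
proof -
  have "bij_betw Suc {..<n} S"
    by (simp add: bij_betw_def image_Suc_lessThan)
  then have "(\<lambda>k. {Suc k, Suc (Suc k mod n)}) ` {..<n} \<in> ham_cycles n"
    unfolding ham_cycles_def by blast
  then show ?thesis unfolding HX_def by blast
qed

lemma NN_pos: "NN > 0" using finX X_ne by (simp add: card_gt_0_iff)

lemma x01: "x \<in> X \<Longrightarrow> x e = 0 \<or> x e = 1"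
  unfolding HX_def incidence_def by auto

lemma xsq: "x \<in> X \<Longrightarrow> x e * x e = x e"
  using x01[of x e] by auto

lemma xnn: "x \<in> X \<Longrightarrow> 0 \<le> x e"
  using x01[of x e] by auto

lemma deg: "x \<in> X \<Longrightarrow> v \<in> S \<Longrightarrow> (\<Sum>w\<in>S - {v}. x {v, w}) = 2"
  unfolding HX_def using ham_deg n6 by auto

lemma tri: "x \<in> X \<Longrightarrow> a \<in> S \<Longrightarrow> b \<in> S \<Longrightarrow> c \<in> S \<Longrightarrow> a \<noteq> b \<Longrightarrow> b \<noteq> c \<Longrightarrow> a \<noteq> c
   \<Longrightarrow> x {a,b} * x {b,c} * x {c,a} = 0"
  unfolding HX_def incidence_def using ham_tri[of _ n a b c] n6 by (auto split: if_splits)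

lemma star: assumes x: "x \<in> X" and S: "a \<in> S" "b \<in> S" "c \<in> S" "d \<in> S"
  and d: "a \<noteq> b" "a \<noteq> c" "a \<noteq> d" "b \<noteq> c" "b \<noteq> d" "c \<noteq> d"
  shows "x {a,b} * x {a,c} * x {a,d} = 0"
proof (rule ccontr)
  assume "x {a,b} * x {a,c} * x {a,d} \<noteq> 0"
  then have 1: "x {a,b} = 1" "x {a,c} = 1" "x {a,d} = 1" using x01[OF x] by (metis mult_zero_left mult_zero_right)+
  have "(\<Sum>w\<in>{b,c,d}. x {a, w}) \<le> (\<Sum>w\<in>S - {a}. x {a, w})"
    by (rule sum_mono2) (use S d xnn[OF x] in auto)
  also have "\<dots> = 2" using deg[OF x S(1)] .
  finally show False using 1 d by simp
qed

lemma sum_const_on: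
  assumes "finite R" "\<And>w. w \<in> R \<Longrightarrow> g w = c"
  shows "(\<Sum>w\<in>R. g w) = real (card R) * c"
  using assms by simp

lemma swap_sum: "(\<Sum>x\<in>X. \<Sum>w\<in>R. f x w) = (\<Sum>w\<in>R. \<Sum>x\<in>X. f x w)"
  by (rule sum.swap)

lemma tr_perm: "a \<in> S \<Longrightarrow> b \<in> S \<Longrightarrow> transpose a b permutes S"
  by (rule permutes_swap_id)

lemma m1: assumes "a \<in> S" "b \<in> S" "a \<noteq> b"
  shows "(\<Sum>x\<in>X. x {a,b}) = 2 * NN / (real n - 1)"
proof -
  have c: "(\<Sum>x\<in>X. x {a,w}) = (\<Sum>x\<in>X. x {a,b})" if w: "w \<in> S - {a}" for w
  proof -
    have "(\<Sum>x\<in>X. x {a,b}) = (\<Sum>x\<in>X. act (transpose b w) x {a,b})"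
      by (rule sum_act, rule tr_perm) (use assms w in auto)
    also have "\<dots> = (\<Sum>x\<in>X. x {a,w})" using assms w by (simp add: act_pair transpose_def)
    finally show ?thesis by simp
  qed
  have "2 * NN = (\<Sum>x\<in>X. \<Sum>w\<in>S - {a}. x {a, w})" using deg assms by simp
  also have "\<dots> = (\<Sum>w\<in>S - {a}. \<Sum>x\<in>X. x {a, w})" by (rule sum.swap)
  also have "\<dots> = real (card (S - {a})) * (\<Sum>x\<in>X. x {a,b})" using c by simp
  also have "card (S - {a}) = n - 1" using assms by simp
  finally show ?thesis using n6 by (simp add: field_simps of_nat_diff)
qed

end

context LN begin

definition "r1 = 2 * NN / (real n - 1)"
definition "r2p = r1 / (real n - 2)"
definition "r3p = r2p / (real n - 3)"

lemma nn: "real n - 1 \<noteq> 0" "real n - 2 \<noteq> 0" "real n - 3 \<noteq> 0" "real n - 4 \<noteq> 0" "real n - 5 \<noteq> 0"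
  using n6 by auto

lemma solve_lin: "(c::real) \<noteq> 0 \<Longrightarrow> c * y = r \<Longrightarrow> y = r / c"
  by (simp add: field_simps)

lemma tsym: "b \<in> S \<Longrightarrow> w \<in> S \<Longrightarrow> (\<Sum>x\<in>X. F x) = (\<Sum>x\<in>X. F (act (transpose b w) x))"
  by (rule sum_act, rule tr_perm) auto

lemma sumX_deg: assumes "v \<in> S"
  shows "(\<Sum>x\<in>X. Q x * (\<Sum>w\<in>S - {v}. x {v, w})) = 2 * (\<Sum>x\<in>X. Q x)"
  using deg[OF _ assms] by (simp add: sum_distrib_left mult.commute)

lemma deg_split: "(\<Sum>x\<in>X. Q x * (\<Sum>w\<in>S - {v}. x {v, w})) = (\<Sum>w\<in>S - {v}. \<Sum>x\<in>X. Q x * x {v, w})"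
  by (simp add: sum_distrib_left sum.swap[of _ X])

lemma degrel: assumes "v \<in> S"
  shows "(\<Sum>w\<in>S - {v}. \<Sum>x\<in>X. Q x * x {v, w}) = 2 * (\<Sum>x\<in>X. Q x)"
  using sumX_deg[OF assms, of Q] deg_split[of Q v] by simp

lemma m1': assumes "a \<in> S" "b \<in> S" "a \<noteq> b" shows "(\<Sum>x\<in>X. x {a,b}) = r1"
  using m1[OF assms] unfolding r1_def .

lemma m2p: assumes S: "a \<in> S" "b \<in> S" "c \<in> S" and d: "a \<noteq> b" "b \<noteq> c" "a \<noteq> c"
  shows "(\<Sum>x\<in>X. x {a,b} * x {b,c}) = r2p"
proof -
  let ?g = "\<lambda>w. \<Sum>x\<in>X. x {a,b} * x {b,w}"
  have c: "?g w = ?g c" if w: "w \<in> S - {b} - {a}" for w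
    using tsym[of c w "\<lambda>x. x {a,b} * x {b,c}"] S d w by (simp add: act_pair transpose_def)
  have ga: "?g a = r1"
    using m1'[OF S(1,2) d(1)] by (simp add: insert_commute xsq)
  have "2 * r1 = (\<Sum>w\<in>S - {b}. ?g w)" using degrel[OF S(2), of "\<lambda>x. x {a,b}"] m1'[OF S(1,2) d(1)] by simp
  also have "\<dots> = ?g a + (\<Sum>w\<in>S - {b} - {a}. ?g w)" using S d by (subst sum.remove[of _ a]) auto
  also have "\<dots> = ?g a + real (card (S - {b} - {a})) * ?g c" using c by simp
  also have "card (S - {b} - {a}) = n - 2" using S d by simp
  finally have E: "2 * r1 = ?g a + real (n - 2) * ?g c" .
  have "(real n - 2) * ?g c = r1" using E ga n6 by (simp add: of_nat_diff algebra_simps)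
  then show ?thesis unfolding r2p_def by (rule solve_lin[OF nn(2)])
qed

end

context LN begin

lemma r1_eq: "r1 = (real n - 2) * r2p" unfolding r2p_def using nn by simp
lemma r2p_eq: "r2p = (real n - 3) * r3p" unfolding r3p_def using nn by simp

lemma srem: "a \<in> A \<Longrightarrow> finite A \<Longrightarrow> (\<Sum>w\<in>A. g w) = g a + (\<Sum>w\<in>A - {a}. g w)"
  by (rule sum.remove)

lemma m2d: assumes S: "a \<in> S" "b \<in> S" "c \<in> S" "d \<in> S"
  and dd: "a \<noteq> b" "a \<noteq> c" "a \<noteq> d" "b \<noteq> c" "b \<noteq> d" "c \<noteq> d"
  shows "(\<Sum>x\<in>X. x {a,b} * x {c,d}) = 2 * r2p"
proof -
  let ?g = "\<lambda>w. \<Sum>x\<in>X. x {a,b} * x {c,w}"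
  have c: "?g w = ?g d" if w: "w \<in> S - {c} - {a} - {b}" for w
    using tsym[of d w "\<lambda>x. x {a,b} * x {c,d}"] S dd w by (simp add: act_pair transpose_def)
  have ga: "?g a = r2p" using m2p[of b a c] S dd by (simp add: insert_commute)
  have gb: "?g b = r2p" using m2p[of a b c] S dd by (simp add: insert_commute)
  have "2 * r1 = (\<Sum>w\<in>S - {c}. ?g w)" using degrel[OF S(3), of "\<lambda>x. x {a,b}"] m1'[OF S(1,2) dd(1)] by simp
  also have "\<dots> = ?g a + ?g b + (\<Sum>w\<in>S - {c} - {a} - {b}. ?g w)" using S dd
    by (subst srem[of a], simp, simp, subst srem[of b], auto)
  also have "\<dots> = ?g a + ?g b + real (card (S - {c} - {a} - {b})) * ?g d" using c by simp
  also have "card (S - {c} - {a} - {b}) = n - 3" using S dd by (simp add: card_Diff_subset)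
  finally have E: "2 * r1 = ?g a + ?g b + real (n - 3) * ?g d" .
  have "(real n - 3) * ?g d = (real n - 3) * (2 * r2p)" using E ga gb n6 r1_eq by (simp add: of_nat_diff algebra_simps)
  then show ?thesis using nn by simp
qed

end

context LN begin

lemma m3p: assumes S: "a \<in> S" "b \<in> S" "c \<in> S" "d \<in> S"
  and dd: "a \<noteq> b" "a \<noteq> c" "a \<noteq> d" "b \<noteq> c" "b \<noteq> d" "c \<noteq> d"
  shows "(\<Sum>x\<in>X. x {a,b} * x {b,c} * x {c,d}) = r3p"
proof -
  let ?g = "\<lambda>w. \<Sum>x\<in>X. x {a,b} * x {b,c} * x {c,w}"
  have c: "?g w = ?g d" if w: "w \<in> S - {c} - {b} - {a}" for w
    using tsym[of d w "\<lambda>x. x {a,b} * x {b,c} * x {c,d}"] S dd w by (simp add: act_pair eq_commute[of _ w])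
  have gb: "?g b = r2p" using m2p[of a b c] S dd by (simp add: insert_commute xsq mult.assoc)
  have ga: "?g a = 0" by (rule sum.neutral) (use tri[of _ a b c] S dd in auto)
  have "2 * r2p = (\<Sum>w\<in>S - {c}. ?g w)" using degrel[OF S(3), of "\<lambda>x. x {a,b} * x {b,c}"] m2p[OF S(1-3)] dd by simp
  also have "\<dots> = ?g b + ?g a + (\<Sum>w\<in>S - {c} - {b} - {a}. ?g w)" using S dd
    by (subst srem[of b], simp, simp, subst srem[of a], auto)
  also have "\<dots> = ?g b + ?g a + real (card (S - {c} - {b} - {a})) * ?g d" using c by simp
  also have "card (S - {c} - {b} - {a}) = n - 3" using S dd by (simp add: card_Diff_subset eval_nat_numeral)
  finally have E: "2 * r2p = ?g b + ?g a + real (n - 3) * ?g d" .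
  have "(real n - 3) * ?g d = r2p" using E ga gb n6 by (simp add: of_nat_diff algebra_simps)
  then show ?thesis unfolding r3p_def by (rule solve_lin[OF nn(3)])
qed

lemma m3pe: assumes S: "a \<in> S" "b \<in> S" "c \<in> S" "d \<in> S" "e \<in> S"
  and dd: "a \<noteq> b" "a \<noteq> c" "a \<noteq> d" "a \<noteq> e" "b \<noteq> c" "b \<noteq> d" "b \<noteq> e" "c \<noteq> d" "c \<noteq> e" "d \<noteq> e"
  shows "(\<Sum>x\<in>X. x {a,b} * x {b,c} * x {d,e}) = 2 * r3p"
proof -
  let ?g = "\<lambda>w. \<Sum>x\<in>X. x {a,b} * x {b,c} * x {d,w}"
  have c: "?g w = ?g e" if w: "w \<in> S - {d} - {a} - {b} - {c}" for w
    using tsym[of e w "\<lambda>x. x {a,b} * x {b,c} * x {d,e}"] S dd w by (simp add: act_pair eq_commute[of _ w])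
  have ga: "?g a = r3p" using m3p[of d a b c] S dd by (simp add: insert_commute mult_ac)
  have gb: "?g b = 0" by (rule sum.neutral) (use star[of _ b a c d] S dd in \<open>auto simp: insert_commute\<close>)
  have gc: "?g c = r3p" using m3p[of a b c d] S dd by (simp add: insert_commute mult_ac)
  have "2 * r2p = (\<Sum>w\<in>S - {d}. ?g w)" using degrel[OF S(4), of "\<lambda>x. x {a,b} * x {b,c}"] m2p[OF S(1-3)] dd by simp
  also have "\<dots> = ?g a + ?g b + ?g c + (\<Sum>w\<in>S - {d} - {a} - {b} - {c}. ?g w)" using S dd
    by (subst srem[of a], simp, simp, subst srem[of b], simp, simp, subst srem[of c], auto)
  also have "\<dots> = ?g a + ?g b + ?g c + real (card (S - {d} - {a} - {b} - {c})) * ?g e" using c by simp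
  also have "card (S - {d} - {a} - {b} - {c}) = n - 4" using S dd by (simp add: card_Diff_subset eval_nat_numeral)
  finally have E: "2 * r2p = ?g a + ?g b + ?g c + real (n - 4) * ?g e" .
  have "(real n - 4) * ?g e = (real n - 4) * (2 * r3p)" using E ga gb gc n6 r2p_eq by (simp add: of_nat_diff algebra_simps)
  then show ?thesis using nn by simp
qed

lemma m3e: assumes S: "a \<in> S" "b \<in> S" "c \<in> S" "d \<in> S" "e \<in> S" "f \<in> S"
  and dd: "a \<noteq> b" "a \<noteq> c" "a \<noteq> d" "a \<noteq> e" "a \<noteq> f" "b \<noteq> c" "b \<noteq> d" "b \<noteq> e" "b \<noteq> f"
     "c \<noteq> d" "c \<noteq> e" "c \<noteq> f" "d \<noteq> e" "d \<noteq> f" "e \<noteq> f"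
  shows "(\<Sum>x\<in>X. x {a,b} * x {c,d} * x {e,f}) = 4 * r3p"
proof -
  let ?g = "\<lambda>w. \<Sum>x\<in>X. x {a,b} * x {c,d} * x {e,w}"
  have c: "?g w = ?g f" if w: "w \<in> S - {e} - {a} - {b} - {c} - {d}" for w
    using tsym[of f w "\<lambda>x. x {a,b} * x {c,d} * x {e,f}"] S dd w by (simp add: act_pair eq_commute[of _ w])
  have ga: "?g a = 2 * r3p" using m3pe[of e a b c d] S dd by (simp add: insert_commute mult_ac)
  have gb: "?g b = 2 * r3p" using m3pe[of a b e c d] S dd by (simp add: insert_commute mult_ac)
  have gc: "?g c = 2 * r3p" using m3pe[of e c d a b] S dd by (simp add: insert_commute mult_ac)
  have gd: "?g d = 2 * r3p" using m3pe[of c d e a b] S dd by (simp add: insert_commute mult_ac)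
  have "2 * (2 * r2p) = (\<Sum>w\<in>S - {e}. ?g w)" using degrel[OF S(5), of "\<lambda>x. x {a,b} * x {c,d}"] m2d[OF S(1-4)] dd by simp
  also have "\<dots> = ?g a + ?g b + ?g c + ?g d + (\<Sum>w\<in>S - {e} - {a} - {b} - {c} - {d}. ?g w)" using S dd
    by (subst srem[of a], simp, simp, subst srem[of b], simp, simp, subst srem[of c], simp, simp, subst srem[of d], auto)
  also have "\<dots> = ?g a + ?g b + ?g c + ?g d + real (card (S - {e} - {a} - {b} - {c} - {d})) * ?g f" using c by simp
  also have "card (S - {e} - {a} - {b} - {c} - {d}) = n - 5" using S dd by (simp add: card_Diff_subset eval_nat_numeral)
  finally have E: "2 * (2 * r2p) = ?g a + ?g b + ?g c + ?g d + real (n - 5) * ?g f" .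
  have "(real n - 5) * ?g f = (real n - 5) * (4 * r3p)" using E ga gb gc gd n6 r2p_eq by (simp add: of_nat_diff algebra_simps)
  then show ?thesis using nn by simp
qed

end

locale LS = LN +
  fixes U :: "nat set"
  assumes Usub: "U \<subseteq> {1..n}" and m3: "3 \<le> card U" and w3: "card U + 3 \<le> n"
begin

abbreviation "m \<equiv> card U"
definition W where "W = S - U"

lemma finU: "finite U" using Usub finite_subset by blast
lemma cardW: "card W = n - m" unfolding W_def using Usub finU by (simp add: card_Diff_subset)
lemma Wmem [simp]: "w \<in> W \<longleftrightarrow> w \<in> S \<and> w \<notin> U" unfolding W_def by auto
lemma finW: "finite W" unfolding W_def by simp
lemma uS: "u \<in> U \<Longrightarrow> u \<in> S" using Usub by auto
lemma wS: "w \<in> W \<Longrightarrow> w \<in> S" by (simp add: Wmem)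
lemma uw: "u \<in> U \<Longrightarrow> w \<in> W \<Longrightarrow> w \<noteq> u \<and> u \<noteq> w" by (auto simp: Wmem)

definition Cw :: "nat set \<Rightarrow> nat set \<Rightarrow> real" where
  "Cw e f = (\<Sum>x\<in>X. cutval n U x * x e * x f)"

lemma Cw_expand: "Cw e f = (\<Sum>u\<in>U. \<Sum>w\<in>W. \<Sum>x\<in>X. x {u,w} * x e * x f) - 2 * (\<Sum>x\<in>X. x e * x f)"
proof -
  have "Cw e f = (\<Sum>x\<in>X. (\<Sum>u\<in>U. \<Sum>w\<in>W. x {u,w} * x e * x f) - 2 * (x e * x f))"
    unfolding Cw_def cutval_def W_def[symmetric] by (rule sum.cong) (simp_all add: sum_distrib_left sum_distrib_right algebra_simps)
  also have "\<dots> = (\<Sum>u\<in>U. \<Sum>w\<in>W. \<Sum>x\<in>X. x {u,w} * x e * x f) - 2 * (\<Sum>x\<in>X. x e * x f)"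
    by (simp add: sum_subtractf sum_distrib_left sum.swap[of _ X])
  finally show ?thesis .
qed

lemma xsq2: "x \<in> X \<Longrightarrow> x e * (x e * y) = x e * y"
  by (simp add: xsq mult.assoc[symmetric])

lemma card_rem2: "a \<in> A \<Longrightarrow> b \<in> A \<Longrightarrow> a \<noteq> b \<Longrightarrow> finite A \<Longrightarrow> card (A - {a} - {b}) = card A - 2"
  by (simp add: card_Diff_subset)

lemma sum_rem1: "a \<in> A \<Longrightarrow> finite A \<Longrightarrow> (\<Sum>w\<in>A. g w) = g a + (\<Sum>w\<in>A - {a}. g w)"
  by (rule sum.remove)

lemma sum_rem2: "a \<in> A \<Longrightarrow> b \<in> A \<Longrightarrow> a \<noteq> b \<Longrightarrow> finite A \<Longrightarrow> (\<Sum>w\<in>A. g w) = g a + g b + (\<Sum>w\<in>A - {a} - {b}. g w)"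
  by (subst sum.remove[of _ a], simp, simp, subst sum.remove[of _ b], auto simp: add.assoc)

lemma sum_rem3: "a \<in> A \<Longrightarrow> b \<in> A \<Longrightarrow> c \<in> A \<Longrightarrow> a \<noteq> b \<Longrightarrow> a \<noteq> c \<Longrightarrow> b \<noteq> c \<Longrightarrow> finite A \<Longrightarrow>
   (\<Sum>w\<in>A. g w) = g a + g b + g c + (\<Sum>w\<in>A - {a} - {b} - {c}. g w)"
  by (subst sum_rem2[of a A b], auto, subst sum.remove[of _ c], auto simp: add.assoc)

lemma sum_rem4: "a \<in> A \<Longrightarrow> b \<in> A \<Longrightarrow> c \<in> A \<Longrightarrow> d \<in> A \<Longrightarrow> a \<noteq> b \<Longrightarrow> a \<noteq> c \<Longrightarrow> a \<noteq> d \<Longrightarrow> b \<noteq> c \<Longrightarrow> b \<noteq> d \<Longrightarrow> c \<noteq> d \<Longrightarrow> finite A \<Longrightarrow>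
   (\<Sum>w\<in>A. g w) = g a + g b + g c + g d + (\<Sum>w\<in>A - {a} - {b} - {c} - {d}. g w)"
  by (subst sum_rem3[of a A b c], auto, subst sum.remove[of _ d], auto simp: add.assoc)

lemma nq1: "x \<in> A - {y} \<Longrightarrow> x \<noteq> y \<and> y \<noteq> x" by auto
lemma nq2: "x \<in> A - {y} - {z} \<Longrightarrow> x \<noteq> y \<and> y \<noteq> x \<and> x \<noteq> z \<and> z \<noteq> x" by auto
lemma nq3: "x \<in> A - {y} - {z} - {t} \<Longrightarrow> x \<noteq> y \<and> y \<noteq> x \<and> x \<noteq> z \<and> z \<noteq> x \<and> x \<noteq> t \<and> t \<noteq> x" by auto
lemma nq4: "x \<in> A - {y} - {z} - {t} - {s} \<Longrightarrow> x \<noteq> y \<and> y \<noteq> x \<and> x \<noteq> z \<and> z \<noteq> x \<and> x \<noteq> t \<and> t \<noteq> x \<and> x \<noteq> s \<and> s \<noteq> x" by auto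

lemma card_rem1: "a \<in> A \<Longrightarrow> finite A \<Longrightarrow> card (A - {a}) = card A - 1"
  by simp
lemma card_rem3: "a \<in> A \<Longrightarrow> b \<in> A \<Longrightarrow> c \<in> A \<Longrightarrow> a \<noteq> b \<Longrightarrow> a \<noteq> c \<Longrightarrow> b \<noteq> c \<Longrightarrow> finite A \<Longrightarrow> card (A - {a} - {b} - {c}) = card A - 3"
  by (simp add: card_Diff_subset)
lemma card_rem4: "a \<in> A \<Longrightarrow> b \<in> A \<Longrightarrow> c \<in> A \<Longrightarrow> d \<in> A \<Longrightarrow> a \<noteq> b \<Longrightarrow> a \<noteq> c \<Longrightarrow> a \<noteq> d \<Longrightarrow> b \<noteq> c \<Longrightarrow> b \<noteq> d \<Longrightarrow> c \<noteq> d \<Longrightarrow> finite A \<Longrightarrow> card (A - {a} - {b} - {c} - {d}) = card A - 4"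
  by (simp add: card_Diff_subset)

lemma C1UU: assumes ab: "a \<in> U" "b \<in> U" "a \<noteq> b"
  shows "Cw {a,b} {a,b} = 2 * (real m - 1) * (real n - real m) * r2p - 2 * r1"
proof -
  have S: "a \<in> S" "b \<in> S" using ab uS by auto
  have ta: "(\<Sum>x\<in>X. x {a,w} * x {a,b} * x {a,b}) = r2p" if w: "w \<in> W" for w
    using m2p[of w a b] S ab w uw[of a w] uw[of b w] by (simp add: xsq mult.assoc insert_commute)
  have tb: "(\<Sum>x\<in>X. x {b,w} * x {a,b} * x {a,b}) = r2p" if w: "w \<in> W" for w
    using m2p[of a b w] S ab w uw[of a w] uw[of b w] by (simp add: xsq xsq2 insert_commute mult_ac)
  have tr: "(\<Sum>x\<in>X. x {u,w} * x {a,b} * x {a,b}) = 2 * r2p" if u: "u \<in> U - {a} - {b}" and w: "w \<in> W" for u w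
    using m2d[of a b u w] S ab u w uw[of a w] uw[of b w] uw[of u w] uS[of u] nq2[OF u] by (simp add: xsq xsq2 mult_ac)
  have "(\<Sum>u\<in>U. \<Sum>w\<in>W. \<Sum>x\<in>X. x {u,w} * x {a,b} * x {a,b})
     = (\<Sum>w\<in>W. \<Sum>x\<in>X. x {a,w} * x {a,b} * x {a,b}) + (\<Sum>w\<in>W. \<Sum>x\<in>X. x {b,w} * x {a,b} * x {a,b})
       + (\<Sum>u\<in>U - {a} - {b}. \<Sum>w\<in>W. \<Sum>x\<in>X. x {u,w} * x {a,b} * x {a,b})"
    by (rule sum_rem2) (use ab finU in auto)
  also have "\<dots> = real (n - m) * r2p + real (n - m) * r2p + real (m - 2) * (real (n - m) * (2 * r2p))"
    using ta tb tr ab finU by (simp add: cardW card_rem2 eval_nat_numeral)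
  finally have E: "(\<Sum>u\<in>U. \<Sum>w\<in>W. \<Sum>x\<in>X. x {u,w} * x {a,b} * x {a,b}) = real (n - m) * r2p + real (n - m) * r2p + real (m - 2) * (real (n - m) * (2 * r2p))" .
  have M: "(\<Sum>x\<in>X. x {a,b} * x {a,b}) = r1" using m1'[OF S ab(3)] by (simp add: xsq)
  show ?thesis unfolding Cw_expand E M using m3 w3 by (simp add: of_nat_diff algebra_simps)
qed


end

context LS begin
lemma C1UW: assumes a: "a \<in> U" and b: "b \<in> W"
  shows "Cw {a,b} {a,b} = r1 + (real n - real m - 1) * r2p + (real m - 1) * (r2p + 2 * (real n - real m - 1) * r2p) - 2 * r1"
proof -
  have S: "a \<in> S" "b \<in> S" "a \<noteq> b" "b \<noteq> a" using a b uS by auto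
  have t1: "(\<Sum>x\<in>X. x {a,b} * x {a,b} * x {a,b}) = r1" using m1'[of a b] S by (simp add: xsq)
  have t2: "(\<Sum>x\<in>X. x {a,w} * x {a,b} * x {a,b}) = r2p" if w: "w \<in> W - {b}" for w
    using m2p[of w a b] S w Wmem assms uw[of a w] nq1[OF w] by (simp add: xsq xsq2 insert_commute mult_ac)
  have t3: "(\<Sum>x\<in>X. x {u,b} * x {a,b} * x {a,b}) = r2p" if u: "u \<in> U - {a}" for u
    using m2p[of u b a] S u assms uw[of u b] nq1[OF u] b uS[of u] by (simp add: xsq xsq2 insert_commute mult_ac)
  have t4: "(\<Sum>x\<in>X. x {u,w} * x {a,b} * x {a,b}) = 2 * r2p" if u: "u \<in> U - {a}" and w: "w \<in> W - {b}" for u w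
    using m2d[of a b u w] S u w Wmem assms nq1[OF u] nq1[OF w] uw[of a w] uw[of u w] uw[of u b] b uS[of u] by (simp add: xsq xsq2 mult_ac)
  have ia: "(\<Sum>w\<in>W. \<Sum>x\<in>X. x {a,w} * x {a,b} * x {a,b}) = r1 + real (n - m - 1) * r2p"
    using t1 t2 b by (simp add: finW sum_rem1[of b W] cardW card_rem1)
  have ir: "(\<Sum>w\<in>W. \<Sum>x\<in>X. x {u,w} * x {a,b} * x {a,b}) = r2p + real (n - m - 1) * (2 * r2p)" if u: "u \<in> U - {a}" for u
    using t3[OF u] t4[OF u] b by (simp add: finW sum_rem1[of b W] cardW card_rem1)
  have "(\<Sum>u\<in>U. \<Sum>w\<in>W. \<Sum>x\<in>X. x {u,w} * x {a,b} * x {a,b}) = (r1 + real (n - m - 1) * r2p) + real (m - 1) * (r2p + real (n - m - 1) * (2 * r2p))"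
    using ia ir a finU by (simp add: sum_rem1[of a U] card_rem1)
  moreover have M: "(\<Sum>x\<in>X. x {a,b} * x {a,b}) = r1" using m1'[of a b] S by (simp add: xsq)
  ultimately show ?thesis unfolding Cw_expand using m3 w3 by (simp add: of_nat_diff algebra_simps)
qed


end

context LS begin
lemma CaUUU: assumes abc: "a \<in> U" "b \<in> U" "c \<in> U" and dd: "a \<noteq> b" "a \<noteq> c" "b \<noteq> c"
  shows "Cw {c,a} {c,b} = 2 * (real n - real m) * r3p + 2 * (real m - 3) * (real n - real m) * r3p - 2 * r2p"
proof -
  have S: "a \<in> S" "b \<in> S" "c \<in> S" using abc uS by auto
  note nd = dd dd[THEN not_sym]
  have tc: "(\<Sum>x\<in>X. x {c,w} * x {c,a} * x {c,b}) = 0" if w: "w \<in> W" for w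
    by (rule sum.neutral) (use star[of _ c a b w] S nd assms w Wmem uw[of a w] uw[of b w] uw[of c w] in \<open>auto simp: mult_ac\<close>)
  have ta: "(\<Sum>x\<in>X. x {a,w} * x {c,a} * x {c,b}) = r3p" if w: "w \<in> W" for w
    using m3p[of w a c b] S nd assms w Wmem uw[of a w] uw[of b w] uw[of c w] by (simp add: insert_commute mult_ac)
  have tb: "(\<Sum>x\<in>X. x {b,w} * x {c,a} * x {c,b}) = r3p" if w: "w \<in> W" for w
    using m3p[of w b c a] S nd assms w Wmem uw[of a w] uw[of b w] uw[of c w] by (simp add: insert_commute mult_ac)
  have tr: "(\<Sum>x\<in>X. x {u,w} * x {c,a} * x {c,b}) = 2 * r3p" if u: "u \<in> U - {a} - {b} - {c}" and w: "w \<in> W" for u w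
    using m3pe[of a c b u w] S nd assms u w Wmem uw[of a w] uw[of b w] uw[of c w] uw[of u w] uS[of u] nq3[OF u]
    by (simp add: insert_commute mult_ac)
  have "(\<Sum>u\<in>U. \<Sum>w\<in>W. \<Sum>x\<in>X. x {u,w} * x {c,a} * x {c,b}) =
      real (n - m) * r3p + real (n - m) * r3p + 0 + real (m - 3) * (real (n - m) * (2 * r3p))"
    using ta tb tc tr abc dd finU by (simp add: sum_rem3[of a U b c] cardW card_rem3 eval_nat_numeral)
  moreover have M: "(\<Sum>x\<in>X. x {c,a} * x {c,b}) = r2p" using m2p[of a c b] S nd assms by (simp add: insert_commute)
  ultimately show ?thesis unfolding Cw_expand using m3 w3 by (simp add: of_nat_diff algebra_simps)
qed


end

context LS begin
lemma CaUWW: assumes c: "c \<in> U" and ab: "a \<in> W" "b \<in> W" "a \<noteq> b"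
  shows "Cw {c,a} {c,b} = 2 * r2p + (real m - 1) * (2 * r3p + (real n - real m - 2) * (2 * r3p)) - 2 * r2p"
proof -
  have S: "a \<in> S" "b \<in> S" "c \<in> S" using ab c uS by auto
  have nd: "a \<noteq> b" "b \<noteq> a" "a \<noteq> c" "c \<noteq> a" "b \<noteq> c" "c \<noteq> b" using ab c by auto
  have c1: "(\<Sum>x\<in>X. x {c,a} * x {c,a} * x {c,b}) = r2p" using m2p[of a c b] S nd assms by (simp add: insert_commute xsq)
  have c2: "(\<Sum>x\<in>X. x {c,b} * x {c,a} * x {c,b}) = r2p" using m2p[of a c b] S nd assms by (simp add: insert_commute xsq xsq2 mult_ac)
  have c3: "(\<Sum>x\<in>X. x {c,w} * x {c,a} * x {c,b}) = 0" if w: "w \<in> W - {a} - {b}" for w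
    by (rule sum.neutral) (use star[of _ c a b w] S nd assms w Wmem uw[of c w] in \<open>auto simp: mult_ac\<close>)
  have u1: "(\<Sum>x\<in>X. x {u,a} * x {c,a} * x {c,b}) = r3p" if u: "u \<in> U - {c}" for u
    using m3p[of u a c b] S nd assms u uw[of u a] uw[of u b] uS[of u] ab nq1[OF u] by (simp add: insert_commute mult_ac)
  have u2: "(\<Sum>x\<in>X. x {u,b} * x {c,a} * x {c,b}) = r3p" if u: "u \<in> U - {c}" for u
    using m3p[of u b c a] S nd assms u uw[of u a] uw[of u b] uS[of u] ab nq1[OF u] by (simp add: insert_commute mult_ac)
  have u3: "(\<Sum>x\<in>X. x {u,w} * x {c,a} * x {c,b}) = 2 * r3p" if u: "u \<in> U - {c}" and w: "w \<in> W - {a} - {b}" for u w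
    using m3pe[of a c b u w] S nd assms u w Wmem uw[of u a] uw[of u b] uw[of u w] uw[of c w] uS[of u] ab nq1[OF u] nq2[OF w]
    by (simp add: insert_commute mult_ac)
  have ic: "(\<Sum>w\<in>W. \<Sum>x\<in>X. x {c,w} * x {c,a} * x {c,b}) = r2p + r2p + 0"
    using c1 c2 c3 ab by (simp add: finW sum_rem2[of a W b])
  have ir: "(\<Sum>w\<in>W. \<Sum>x\<in>X. x {u,w} * x {c,a} * x {c,b}) = r3p + r3p + real (n - m - 2) * (2 * r3p)" if u: "u \<in> U - {c}" for u
    using u1[OF u] u2[OF u] u3[OF u] ab by (simp add: finW sum_rem2[of a W b] cardW card_rem2 eval_nat_numeral)
  have "(\<Sum>u\<in>U. \<Sum>w\<in>W. \<Sum>x\<in>X. x {u,w} * x {c,a} * x {c,b}) = (r2p + r2p + 0) + real (m - 1) * (r3p + r3p + real (n - m - 2) * (2 * r3p))"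
    using ic ir c finU by (simp add: sum_rem1[of c U] card_rem1)
  moreover have M: "(\<Sum>x\<in>X. x {c,a} * x {c,b}) = r2p" using m2p[of a c b] S nd assms by (simp add: insert_commute)
  ultimately show ?thesis unfolding Cw_expand using m3 w3 by (simp add: of_nat_diff algebra_simps)
qed


end

context LS begin

lemma CaWUU: assumes c: "c \<in> W" and ab: "a \<in> U" "b \<in> U" "a \<noteq> b"
  shows "Cw {c,a} {c,b} = 2 * (r2p + (real n - real m - 1) * r3p) + (real m - 2) * (real n - real m - 1) * (2 * r3p) - 2 * r2p"
proof -
  have S: "a \<in> S" "b \<in> S" "c \<in> S" using ab c uS by auto
  have nd: "a \<noteq> b" "b \<noteq> a" "a \<noteq> c" "c \<noteq> a" "b \<noteq> c" "c \<noteq> b" using ab c uw by auto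
  have a1: "(\<Sum>x\<in>X. x {a,c} * x {c,a} * x {c,b}) = r2p" using m2p[of a c b] S nd by (simp add: insert_commute xsq)
  have a2: "(\<Sum>x\<in>X. x {a,w} * x {c,a} * x {c,b}) = r3p" if w: "w \<in> W - {c}" for w
    using m3p[of w a c b] S nd assms w uw[of a w] uw[of b w] nq1[OF w] by (simp add: insert_commute mult_ac)
  have b1: "(\<Sum>x\<in>X. x {b,c} * x {c,a} * x {c,b}) = r2p" using m2p[of a c b] S nd by (simp add: insert_commute xsq xsq2 mult_ac)
  have b2: "(\<Sum>x\<in>X. x {b,w} * x {c,a} * x {c,b}) = r3p" if w: "w \<in> W - {c}" for w
    using m3p[of w b c a] S nd assms w uw[of a w] uw[of b w] nq1[OF w] by (simp add: insert_commute mult_ac)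
  have r1': "(\<Sum>x\<in>X. x {u,c} * x {c,a} * x {c,b}) = 0" if u: "u \<in> U - {a} - {b}" for u
    by (rule sum.neutral) (use star[of _ c a b u] S nd u uw[of u c] c uS[of u] nq2[OF u] in \<open>auto simp: mult_ac insert_commute\<close>)
  have r2: "(\<Sum>x\<in>X. x {u,w} * x {c,a} * x {c,b}) = 2 * r3p" if u: "u \<in> U - {a} - {b}" and w: "w \<in> W - {c}" for u w
    using m3pe[of a c b u w] S nd assms u w uw[of a w] uw[of b w] uw[of u w] uw[of u c] uS[of u] nq2[OF u] nq1[OF w]
    by (simp add: insert_commute mult_ac)
  have ia: "(\<Sum>w\<in>W. \<Sum>x\<in>X. x {a,w} * x {c,a} * x {c,b}) = r2p + real (n - m - 1) * r3p"
    using a1 a2 c by (simp add: finW sum_rem1[of c W] cardW card_rem1)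
  have ib: "(\<Sum>w\<in>W. \<Sum>x\<in>X. x {b,w} * x {c,a} * x {c,b}) = r2p + real (n - m - 1) * r3p"
    using b1 b2 c by (simp add: finW sum_rem1[of c W] cardW card_rem1)
  have ir: "(\<Sum>w\<in>W. \<Sum>x\<in>X. x {u,w} * x {c,a} * x {c,b}) = 0 + real (n - m - 1) * (2 * r3p)" if u: "u \<in> U - {a} - {b}" for u
    using r1'[OF u] r2[OF u] c by (simp add: finW sum_rem1[of c W] cardW card_rem1)
  have "(\<Sum>u\<in>U. \<Sum>w\<in>W. \<Sum>x\<in>X. x {u,w} * x {c,a} * x {c,b}) = (r2p + real (n - m - 1) * r3p) + (r2p + real (n - m - 1) * r3p) + real (m - 2) * (0 + real (n - m - 1) * (2 * r3p))"
    using ia ib ir ab finU by (simp add: sum_rem2[of a U b] card_rem2 eval_nat_numeral)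
  moreover have M: "(\<Sum>x\<in>X. x {c,a} * x {c,b}) = r2p" using m2p[of a c b] S nd by (simp add: insert_commute)
  ultimately show ?thesis unfolding Cw_expand using m3 w3 by (simp add: of_nat_diff algebra_simps)
qed

end

context LS begin

lemma CdUUUU: assumes abcd: "a \<in> U" "b \<in> U" "c \<in> U" "d \<in> U"
  and dd: "a \<noteq> b" "a \<noteq> c" "a \<noteq> d" "b \<noteq> c" "b \<noteq> d" "c \<noteq> d"
  shows "Cw {a,b} {c,d} = 4 * (real n - real m) * (2 * r3p) + (real m - 4) * (real n - real m) * (4 * r3p) - 4 * r2p"
proof -
  have S: "a \<in> S" "b \<in> S" "c \<in> S" "d \<in> S" using abcd uS by auto
  note nd = dd dd[THEN not_sym]
  have "card {a,b,c,d} \<le> m" using card_mono[OF finU, of "{a,b,c,d}"] abcd by auto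
  then have m4: "4 \<le> m" using dd by simp
  have ta: "(\<Sum>x\<in>X. x {a,w} * x {a,b} * x {c,d}) = 2 * r3p" if w: "w \<in> W" for w
    using m3pe[of w a b c d] S nd assms w uw[of a w] uw[of b w] uw[of c w] uw[of d w] by (simp add: insert_commute mult_ac)
  have tb: "(\<Sum>x\<in>X. x {b,w} * x {a,b} * x {c,d}) = 2 * r3p" if w: "w \<in> W" for w
    using m3pe[of a b w c d] S nd assms w uw[of a w] uw[of b w] uw[of c w] uw[of d w] by (simp add: insert_commute mult_ac)
  have tc: "(\<Sum>x\<in>X. x {c,w} * x {a,b} * x {c,d}) = 2 * r3p" if w: "w \<in> W" for w
    using m3pe[of w c d a b] S nd assms w uw[of a w] uw[of b w] uw[of c w] uw[of d w] by (simp add: insert_commute mult_ac)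
  have td: "(\<Sum>x\<in>X. x {d,w} * x {a,b} * x {c,d}) = 2 * r3p" if w: "w \<in> W" for w
    using m3pe[of c d w a b] S nd assms w uw[of a w] uw[of b w] uw[of c w] uw[of d w] by (simp add: insert_commute mult_ac)
  have tr: "(\<Sum>x\<in>X. x {u,w} * x {a,b} * x {c,d}) = 4 * r3p" if u: "u \<in> U - {a} - {b} - {c} - {d}" and w: "w \<in> W" for u w
    using m3e[of a b c d u w] S nd assms u w uw[of a w] uw[of b w] uw[of c w] uw[of d w] uw[of u w] uS[of u] nq4[OF u]
    by (simp add: insert_commute mult_ac)
  have "(\<Sum>u\<in>U. \<Sum>w\<in>W. \<Sum>x\<in>X. x {u,w} * x {a,b} * x {c,d}) =
      real (n - m) * (2 * r3p) + real (n - m) * (2 * r3p) + real (n - m) * (2 * r3p) + real (n - m) * (2 * r3p)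
      + real (m - 4) * (real (n - m) * (4 * r3p))"
    using ta tb tc td tr abcd dd finU by (simp add: sum_rem4[of a U b c d] cardW card_rem4 eval_nat_numeral)
  moreover have M: "(\<Sum>x\<in>X. x {a,b} * x {c,d}) = 2 * r2p" using m2d[of a b c d] S nd by simp
  ultimately show ?thesis unfolding Cw_expand using m4 w3 by (simp add: of_nat_diff algebra_simps)
qed

end

context LS begin

lemma CdUWUW: assumes ac: "a \<in> U" "c \<in> U" "a \<noteq> c" and bd: "b \<in> W" "d \<in> W" "b \<noteq> d"
  shows "Cw {a,b} {c,d} = 2 * (2 * r2p + r3p + (real n - real m - 2) * (2 * r3p))
     + (real m - 2) * (2 * (2 * r3p) + (real n - real m - 2) * (4 * r3p)) - 4 * r2p"
proof -
  have S: "a \<in> S" "b \<in> S" "c \<in> S" "d \<in> S" using ac bd uS by auto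
  have nd: "a \<noteq> b" "b \<noteq> a" "a \<noteq> c" "c \<noteq> a" "a \<noteq> d" "d \<noteq> a" "b \<noteq> c" "c \<noteq> b" "b \<noteq> d" "d \<noteq> b" "c \<noteq> d" "d \<noteq> c"
    using ac bd uw by auto
  have a1: "(\<Sum>x\<in>X. x {a,b} * x {a,b} * x {c,d}) = 2 * r2p" using m2d[of a b c d] S nd by (simp add: xsq)
  have a2: "(\<Sum>x\<in>X. x {a,d} * x {a,b} * x {c,d}) = r3p" using m3p[of b a d c] S nd by (simp add: insert_commute mult_ac)
  have a3: "(\<Sum>x\<in>X. x {a,w} * x {a,b} * x {c,d}) = 2 * r3p" if w: "w \<in> W - {b} - {d}" for w
    using m3pe[of w a b c d] S nd assms w uw[of a w] uw[of c w] nq2[OF w] by (simp add: insert_commute mult_ac)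
  have c1: "(\<Sum>x\<in>X. x {c,b} * x {a,b} * x {c,d}) = r3p" using m3p[of a b c d] S nd by (simp add: insert_commute mult_ac)
  have c2: "(\<Sum>x\<in>X. x {c,d} * x {a,b} * x {c,d}) = 2 * r2p" using m2d[of a b c d] S nd by (simp add: xsq xsq2 mult_ac)
  have c3: "(\<Sum>x\<in>X. x {c,w} * x {a,b} * x {c,d}) = 2 * r3p" if w: "w \<in> W - {b} - {d}" for w
    using m3pe[of w c d a b] S nd assms w uw[of a w] uw[of c w] nq2[OF w] by (simp add: insert_commute mult_ac)
  have u1: "(\<Sum>x\<in>X. x {u,b} * x {a,b} * x {c,d}) = 2 * r3p" if u: "u \<in> U - {a} - {c}" for u
    using m3pe[of u b a c d] S nd assms u uw[of u b] uw[of u d] uS[of u] nq2[OF u] by (simp add: insert_commute mult_ac)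
  have u2: "(\<Sum>x\<in>X. x {u,d} * x {a,b} * x {c,d}) = 2 * r3p" if u: "u \<in> U - {a} - {c}" for u
    using m3pe[of u d c a b] S nd assms u uw[of u b] uw[of u d] uS[of u] nq2[OF u] by (simp add: insert_commute mult_ac)
  have u3: "(\<Sum>x\<in>X. x {u,w} * x {a,b} * x {c,d}) = 4 * r3p" if u: "u \<in> U - {a} - {c}" and w: "w \<in> W - {b} - {d}" for u w
    using m3e[of a b c d u w] S nd assms u w uw[of u b] uw[of u d] uw[of u w] uw[of a w] uw[of c w] uS[of u] nq2[OF u] nq2[OF w]
    by (simp add: insert_commute mult_ac)
  have ia: "(\<Sum>w\<in>W. \<Sum>x\<in>X. x {a,w} * x {a,b} * x {c,d}) = 2 * r2p + r3p + real (n - m - 2) * (2 * r3p)"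
    using a1 a2 a3 bd by (simp add: finW sum_rem2[of b W d] cardW card_rem2 eval_nat_numeral)
  have ic: "(\<Sum>w\<in>W. \<Sum>x\<in>X. x {c,w} * x {a,b} * x {c,d}) = r3p + 2 * r2p + real (n - m - 2) * (2 * r3p)"
    using c1 c2 c3 bd by (simp add: finW sum_rem2[of b W d] cardW card_rem2 eval_nat_numeral)
  have ir: "(\<Sum>w\<in>W. \<Sum>x\<in>X. x {u,w} * x {a,b} * x {c,d}) = 2 * r3p + 2 * r3p + real (n - m - 2) * (4 * r3p)" if u: "u \<in> U - {a} - {c}" for u
    using u1[OF u] u2[OF u] u3[OF u] bd by (simp add: finW sum_rem2[of b W d] cardW card_rem2 eval_nat_numeral)
  have "(\<Sum>u\<in>U. \<Sum>w\<in>W. \<Sum>x\<in>X. x {u,w} * x {a,b} * x {c,d}) = (2 * r2p + r3p + real (n - m - 2) * (2 * r3p)) + (r3p + 2 * r2p + real (n - m - 2) * (2 * r3p)) + real (m - 2) * (2 * r3p + 2 * r3p + real (n - m - 2) * (4 * r3p))"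
    using ia ic ir ac finU by (simp add: sum_rem2[of a U c] card_rem2 eval_nat_numeral)
  moreover have M: "(\<Sum>x\<in>X. x {a,b} * x {c,d}) = 2 * r2p" using m2d[of a b c d] S nd by simp
  ultimately show ?thesis unfolding Cw_expand using m3 w3 by (simp add: of_nat_diff algebra_simps)
qed

end

context LS begin

definition "D = (\<Sum>x\<in>X. cutval n U x)"

definition Kf :: "((nat set \<Rightarrow> real) \<Rightarrow> real) \<Rightarrow> nat set option \<Rightarrow> real" where
  "Kf P \<mu> = (\<Sum>x\<in>X. cutval n U x * mon \<mu> x * P x)"

lemma NN_eq: "NN = (real n - 1) * (real n - 2) * (real n - 3) * r3p / 2"
  unfolding r3p_def r2p_def r1_def using nn by simp

lemma r1_eq3: "r1 = (real n - 2) * (real n - 3) * r3p" using r1_eq r2p_eq by simp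

lemma D_eq: "D = real m * (real n - real m) * r1 - 2 * NN"
proof -
  have "D = (\<Sum>u\<in>U. \<Sum>w\<in>W. \<Sum>x\<in>X. x {u,w}) - 2 * NN"
    unfolding D_def cutval_def W_def[symmetric] by (simp add: sum_subtractf sum.swap[of _ X])
  also have "(\<Sum>u\<in>U. \<Sum>w\<in>W. \<Sum>x\<in>X. x {u,w}) = (\<Sum>u\<in>U. \<Sum>w\<in>W. r1)"
    by (intro sum.cong refl) (rule m1', use uS uw in auto)
  finally show ?thesis using cardW m3 w3 by (simp add: of_nat_diff)
qed

lemma r3p_pos: "r3p > 0"
  unfolding r3p_def r2p_def r1_def using NN_pos n6 by simp

lemma D_eq2: "D = (real n - 2) * (real n - 3) * r3p * ((real m - 1) * (real n - real m - 1))"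
  unfolding D_eq r1_eq3 NN_eq by (simp add: field_simps)

lemma mm: "real m - 1 \<noteq> 0" "real m - 2 \<noteq> 0" "real n - real m - 1 \<noteq> 0" "real n - real m - 2 \<noteq> 0"
  using m3 w3 by auto

lemma D_pos: "D > 0"
proof -
  have "D = (real n - 2) * (real n - 3) * r3p * ((real m - 1) * (real n - real m - 1))"
    unfolding D_eq r1_eq3 NN_eq by (simp add: field_simps)
  moreover have "(real m - 1) * (real n - real m - 1) > 0" using m3 w3 by simp
  ultimately show ?thesis using r3p_pos n6 by simp
qed

lemma finE: "finite (edges n)"
proof -
  have "edges n \<subseteq> Pow S" unfolding edges_def by auto
  then show ?thesis by (rule finite_subset) simp
qed

lemma finB: "finite (basis1 n)" unfolding basis1_def using finE by simp

lemma eig_conv: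
  assumes supp: "\<forall>\<mu>. \<mu> \<notin> basis1 n \<longrightarrow> v \<mu> = 0" and nz: "\<exists>\<mu>\<in>basis1 n. v \<mu> \<noteq> 0"
    and Pv: "\<And>x. x \<in> X \<Longrightarrow> (\<Sum>\<nu>\<in>basis1 n. v \<nu> * mon \<nu> x) = P x"
    and K: "\<And>\<mu>. \<mu> \<in> basis1 n \<Longrightarrow> Kf P \<mu> = lam * D * v \<mu>"
  shows "is_eigvec n (AU n U) v lam"
  unfolding is_eigvec_def
proof (intro conjI ballI)
  show "\<forall>\<mu>. \<mu> \<notin> basis1 n \<longrightarrow> v \<mu> = 0" by fact
  show "\<exists>\<mu>\<in>basis1 n. v \<mu> \<noteq> 0" by fact
  fix \<mu> assume \<mu>: "\<mu> \<in> basis1 n"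
  have hU: "hU n U x = NN / D * cutval n U x" for x
    unfolding hU_def D_def by simp
  have "(\<Sum>\<nu>\<in>basis1 n. AU n U \<mu> \<nu> * v \<nu>) = (\<Sum>\<nu>\<in>basis1 n. \<Sum>x\<in>X. (1 / NN) * (hU n U x * mon \<mu> x * mon \<nu> x * v \<nu>))"
    unfolding AU_def qmat_def by (simp add: sum_distrib_left sum_distrib_right mult.assoc)
  also have "\<dots> = (\<Sum>x\<in>X. (1 / NN) * (hU n U x * mon \<mu> x * (\<Sum>\<nu>\<in>basis1 n. v \<nu> * mon \<nu> x)))"
    by (subst sum.swap) (simp add: sum_distrib_left mult_ac)
  also have "\<dots> = (\<Sum>x\<in>X. (1 / D) * (cutval n U x * mon \<mu> x * P x))"
    using NN_pos D_pos by (intro sum.cong refl) (simp add: Pv hU)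
  also have "\<dots> = (1 / D) * Kf P \<mu>" unfolding Kf_def by (simp add: sum_distrib_left)
  also have "\<dots> = lam * v \<mu>" using K[OF \<mu>] D_pos by simp
  finally show "(\<Sum>\<nu>\<in>basis1 n. AU n U \<mu> \<nu> * v \<nu>) = lam * v \<mu>" .
qed

lemma edge_in: "i \<in> S \<Longrightarrow> j \<in> S \<Longrightarrow> i \<noteq> j \<Longrightarrow> {i,j} \<in> edges n"
  unfolding edges_def by blast

lemma Pv_xv: assumes "i \<in> S" "j \<in> S" "i \<noteq> j"
  shows "(\<Sum>\<nu>\<in>basis1 n. xv i j \<nu> * mon \<nu> x) = x {i,j}"
proof -
  have "Some {i,j} \<in> basis1 n" using edge_in[OF assms] unfolding basis1_def by simp
  have "(\<Sum>\<nu>\<in>basis1 n. xv i j \<nu> * mon \<nu> x) = (\<Sum>\<nu>\<in>basis1 n. if \<nu> = Some {i,j} then mon \<nu> x else 0)"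
    unfolding xv_def by (rule sum.cong) auto
  then show ?thesis using finB \<open>Some {i,j} \<in> basis1 n\<close> by (simp add: sum.delta')
qed

lemma Pv_one: "(\<Sum>\<nu>\<in>basis1 n. one_v \<nu> * mon \<nu> x) = 1"
proof -
  have "(\<Sum>\<nu>\<in>basis1 n. one_v \<nu> * mon \<nu> x) = (\<Sum>\<nu>\<in>basis1 n. if \<nu> = None then mon \<nu> x else 0)"
    unfolding one_v_def by (rule sum.cong) auto
  then show ?thesis using finB by (simp add: sum.delta' basis1_def)
qed

lemma xv_out: "i \<in> S \<Longrightarrow> j \<in> S \<Longrightarrow> i \<noteq> j \<Longrightarrow> \<mu> \<notin> basis1 n \<Longrightarrow> xv i j \<mu> = 0"
  unfolding xv_def basis1_def using edge_in by auto

lemma one_out: "\<mu> \<notin> basis1 n \<Longrightarrow> one_v \<mu> = 0"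
  unfolding one_v_def basis1_def by auto

lemma pres_img: assumes p: "\<tau> permutes S" and pr: "\<forall>z. \<tau> z \<in> U \<longleftrightarrow> z \<in> U"
  shows "\<tau> ` U = U" "\<tau> ` W = W"
proof -
  show "\<tau> ` U = U"
  proof
    show "\<tau> ` U \<subseteq> U" using pr by auto
    show "U \<subseteq> \<tau> ` U"
    proof
      fix u assume u: "u \<in> U"
      have "\<tau> (inv \<tau> u) = u" using permutes_inverses(1)[OF p] .
      then have "inv \<tau> u \<in> U" using pr u by metis
      then show "u \<in> \<tau> ` U" using \<open>\<tau> (inv \<tau> u) = u\<close> by (metis image_eqI)
    qed
  qed
  show "\<tau> ` W = W"
  proof
    show "\<tau> ` W \<subseteq> W" using pr permutes_in_image[OF p] by (auto simp: Wmem)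
    show "W \<subseteq> \<tau> ` W"
    proof
      fix u assume u: "u \<in> W"
      have e: "\<tau> (inv \<tau> u) = u" using permutes_inverses(1)[OF p] .
      then have "inv \<tau> u \<in> W" using pr u permutes_in_image[OF p, of "inv \<tau> u"] by (metis Wmem)
      then show "u \<in> \<tau> ` W" using e by (metis image_eqI)
    qed
  qed
qed

lemma reidx: "inj_on \<tau> A \<Longrightarrow> \<tau> ` A = A \<Longrightarrow> (\<Sum>a\<in>A. g (\<tau> a)) = (\<Sum>a\<in>A. (g a::real))"
  using sum.reindex[of \<tau> A g] by simp

lemma cut_act: assumes p: "\<tau> permutes S" and pr: "\<forall>z. \<tau> z \<in> U \<longleftrightarrow> z \<in> U"
  shows "cutval n U (act \<tau> x) = cutval n U x"
proof -
  have inj: "inj_on \<tau> A" for A using permutes_inj[OF p] by (simp add: inj_on_def inj_def)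
  have "(\<Sum>u\<in>U. \<Sum>v\<in>W. x {\<tau> u, \<tau> v}) = (\<Sum>u\<in>U. \<Sum>v\<in>W. x {\<tau> u, v})"
  proof (rule sum.cong[OF refl])
    fix u show "(\<Sum>v\<in>W. x {\<tau> u, \<tau> v}) = (\<Sum>v\<in>W. x {\<tau> u, v})"
      by (rule reidx[OF inj pres_img(2)[OF p pr], where g = "\<lambda>v. x {\<tau> u, v}"])
  qed
  also have "\<dots> = (\<Sum>u\<in>U. \<Sum>v\<in>W. x {u, v})"
    by (rule reidx[OF inj pres_img(1)[OF p pr], where g = "\<lambda>u. \<Sum>v\<in>W. x {u, v}"])
  finally show ?thesis unfolding cutval_def W_def[symmetric] by (simp add: act_pair)
qed

lemma mon_act: "mon \<mu> (act \<tau> x) = mon (map_option ((`) \<tau>) \<mu>) x"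
  by (cases \<mu>) (simp_all add: act_def)

lemma K_anti: assumes p: "\<tau> permutes S" and pr: "\<forall>z. \<tau> z \<in> U \<longleftrightarrow> z \<in> U"
  and PP: "\<And>x. x \<in> X \<Longrightarrow> P (act \<tau> x) = - P x"
  shows "Kf P \<mu> = - Kf P (map_option ((`) \<tau>) \<mu>)"
proof -
  have "Kf P \<mu> = (\<Sum>x\<in>X. cutval n U (act \<tau> x) * mon \<mu> (act \<tau> x) * P (act \<tau> x))"
    unfolding Kf_def by (rule sum_act[OF p])
  also have "\<dots> = (\<Sum>x\<in>X. - (cutval n U x * mon (map_option ((`) \<tau>) \<mu>) x * P x))"
    by (intro sum.cong refl) (simp add: cut_act[OF p pr] mon_act PP)
  also have "\<dots> = - Kf P (map_option ((`) \<tau>) \<mu>)" unfolding Kf_def by (simp add: sum_negf)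
  finally show ?thesis .
qed

lemma K_fix: assumes p: "\<tau> permutes S" and pr: "\<forall>z. \<tau> z \<in> U \<longleftrightarrow> z \<in> U"
  and PP: "\<And>x. x \<in> X \<Longrightarrow> P (act \<tau> x) = - P x" and fx: "map_option ((`) \<tau>) \<mu> = \<mu>"
  shows "Kf P \<mu> = 0"
  using K_anti[of \<tau> P \<mu>, OF p pr PP] fx by simp

lemma tr_pres: "a \<in> U \<Longrightarrow> b \<in> U \<Longrightarrow> \<forall>z. transpose a b z \<in> U \<longleftrightarrow> z \<in> U"
  by (auto simp: transpose_def)

lemma tr_presW: "a \<in> W \<Longrightarrow> b \<in> W \<Longrightarrow> \<forall>z. transpose a b z \<in> U \<longleftrightarrow> z \<in> U"
  by (auto simp: transpose_def)

lemma Kf_lin4: "Kf (\<lambda>x. x e1 - x e2 + x e3 - x e4) (Some e) = Cw e e1 - Cw e e2 + Cw e e3 - Cw e e4"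
  unfolding Kf_def Cw_def by (simp add: algebra_simps sum_subtractf sum.distrib)

lemma ins2: "{a, b} = {b, a}" by auto

lemma edge_cases: "\<mu> \<in> basis1 n \<Longrightarrow> \<mu> = None \<or> (\<exists>a b. \<mu> = Some {a,b} \<and> a \<in> S \<and> b \<in> S \<and> a \<noteq> b)"
  unfolding basis1_def edges_def by auto

end

context LS begin

lemma type1: assumes i: "i \<in> S"
  shows "is_eigvec n (AU n U) (\<lambda>\<mu>. 2 * one_v \<mu> - (\<Sum>j\<in>S - {i}. xv i j \<mu>)) 0"
proof (rule eig_conv[where P = "\<lambda>x. 2 - (\<Sum>j\<in>S - {i}. x {i,j})"])
  show "\<forall>\<mu>. \<mu> \<notin> basis1 n \<longrightarrow> 2 * one_v \<mu> - (\<Sum>j\<in>S - {i}. xv i j \<mu>) = 0"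
    using one_out xv_out i by simp
  show "\<exists>\<mu>\<in>basis1 n. 2 * one_v \<mu> - (\<Sum>j\<in>S - {i}. xv i j \<mu>) \<noteq> 0"
    by (rule bexI[of _ None]) (auto simp: one_v_def xv_def basis1_def)
  fix x assume x: "x \<in> X"
  have "(\<Sum>\<nu>\<in>basis1 n. (2 * one_v \<nu> - (\<Sum>j\<in>S - {i}. xv i j \<nu>)) * mon \<nu> x)
      = 2 * (\<Sum>\<nu>\<in>basis1 n. one_v \<nu> * mon \<nu> x) - (\<Sum>j\<in>S - {i}. \<Sum>\<nu>\<in>basis1 n. xv i j \<nu> * mon \<nu> x)"
    by (simp add: left_diff_distrib sum_subtractf sum_distrib_left sum_distrib_right sum.swap[of _ "basis1 n"] mult.assoc)
  also have "\<dots> = 2 - (\<Sum>j\<in>S - {i}. x {i,j})"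
    using i by (simp add: Pv_one Pv_xv)
  finally show "(\<Sum>\<nu>\<in>basis1 n. (2 * one_v \<nu> - (\<Sum>j\<in>S - {i}. xv i j \<nu>)) * mon \<nu> x) = 2 - (\<Sum>j\<in>S - {i}. x {i,j})" .
next
  fix \<mu> assume "\<mu> \<in> basis1 n"
  have "Kf (\<lambda>x. 2 - (\<Sum>j\<in>S - {i}. x {i,j})) \<mu> = 0"
    unfolding Kf_def by (rule sum.neutral, rule ballI, subst deg[OF _ i], assumption, simp)
  then show "Kf (\<lambda>x. 2 - (\<Sum>j\<in>S - {i}. x {i,j})) \<mu> = 0 * D * (2 * one_v \<mu> - (\<Sum>j\<in>S - {i}. xv i j \<mu>))" by simp
qed

end

context LS begin


lemma type2: assumes U4: "i \<in> U" "j \<in> U" "f \<in> U" "g \<in> U" and dist: "distinct [i, j, f, g]"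
  shows "is_eigvec n (AU n U) (\<lambda>\<mu>. xv i j \<mu> - xv j f \<mu> + xv f g \<mu> - xv g i \<mu>)
          (2 * (real m - 2) / ((real n - 2) * (real m - 1)))"
proof -
  let ?v = "\<lambda>\<mu>. xv i j \<mu> - xv j f \<mu> + xv f g \<mu> - xv g i \<mu>"
  let ?P = "\<lambda>x. x {i,j} - x {j,f} + x {f,g} - x {g,i}"
  let ?lam = "2 * (real m - 2) / ((real n - 2) * (real m - 1))"
  have S: "i \<in> S" "j \<in> S" "f \<in> S" "g \<in> S" using U4 uS by auto
  have nd: "i \<noteq> j" "i \<noteq> f" "i \<noteq> g" "j \<noteq> f" "j \<noteq> g" "f \<noteq> g"
           "j \<noteq> i" "f \<noteq> i" "g \<noteq> i" "f \<noteq> j" "g \<noteq> j" "g \<noteq> f" using dist by auto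
  define t1 where "t1 = transpose i f"
  define t2 where "t2 = transpose j g"
  have p1: "t1 permutes S" "\<forall>z. t1 z \<in> U \<longleftrightarrow> z \<in> U" unfolding t1_def using S U4 tr_pres tr_perm by auto
  have p2: "t2 permutes S" "\<forall>z. t2 z \<in> U \<longleftrightarrow> z \<in> U" unfolding t2_def using S U4 tr_pres tr_perm by auto
  have PP1: "?P (act t1 x) = - ?P x" for x unfolding t1_def using nd by (simp add: act_pair insert_commute)
  have PP2: "?P (act t2 x) = - ?P x" for x unfolding t2_def using nd by (simp add: act_pair insert_commute)
  have K0: "Kf ?P (Some {i,j}) = ?lam * D"
  proof -
    have "Kf ?P (Some {i,j}) = Cw {i,j} {i,j} - Cw {j,i} {j,f} + Cw {i,j} {f,g} - Cw {i,j} {i,g}"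
      unfolding Kf_lin4 by (simp add: ins2[of i j] ins2[of g i])
    also have "\<dots> = 2 * (real m - 2) * (real n - 3) * (real n - real m - 1) * r3p"
      unfolding C1UU[OF U4(1,2) nd(1)] CaUUU[OF U4(1,3,2) nd(2,1,10)] CdUUUU[OF U4 nd(1-6)]
        CaUUU[OF U4(2,4,1) nd(5,7,9)] r1_eq3 r2p_eq
      by (simp add: algebra_simps)
    also have "\<dots> = ?lam * D"
    proof -
      have d: "(real n - 2) * (real m - 1) \<noteq> 0" using nn mm by simp
      have "D = ((real n - 2) * (real m - 1)) * ((real n - 3) * r3p * (real n - real m - 1))"
        unfolding D_eq2 by (simp add: algebra_simps)
      then have "?lam * D = 2 * (real m - 2) * ((real n - 3) * r3p * (real n - real m - 1))"
        using d by simp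
      then show ?thesis by (simp add: algebra_simps)
    qed
    finally show ?thesis .
  qed
  show ?thesis
  proof (rule eig_conv[where P = ?P])
    show "\<forall>\<mu>. \<mu> \<notin> basis1 n \<longrightarrow> ?v \<mu> = 0" using xv_out S nd by simp
    show "\<exists>\<mu>\<in>basis1 n. ?v \<mu> \<noteq> 0"
      by (rule bexI[of _ "Some {i,j}"]) (use nd edge_in[OF S(1,2) nd(1)] in \<open>auto simp: xv_def basis1_def doubleton_eq_iff\<close>)
    show "(\<Sum>\<nu>\<in>basis1 n. ?v \<nu> * mon \<nu> x) = ?P x" for x
      using S nd by (simp add: left_diff_distrib distrib_right sum.distrib sum_subtractf Pv_xv)
    fix \<mu> assume \<mu>: "\<mu> \<in> basis1 n"
    show "Kf ?P \<mu> = ?lam * D * ?v \<mu>"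
    proof (cases "\<mu> = None")
      case True
      then show ?thesis using K_fix[of t1 ?P \<mu>, OF p1 PP1] by (simp add: xv_def)
    next
      case False
      then obtain a b where ab: "\<mu> = Some {a,b}" "a \<in> S" "b \<in> S" "a \<noteq> b" using edge_cases[OF \<mu>] by blast
      let ?Sup = "{{i,j},{j,f},{f,g},{g,i}}"
      show ?thesis
      proof (cases "{a,b} \<in> ?Sup")
        case False
        then have v0: "?v \<mu> = 0" unfolding ab by (auto simp: xv_def)
        have "t1 ` {a,b} = {a,b} \<or> t2 ` {a,b} = {a,b}"
          using False nd unfolding t1_def t2_def by (auto simp: transpose_def)
        then have "Kf ?P \<mu> = 0"
          using K_fix[of t1 ?P \<mu>, OF p1 PP1] K_fix[of t2 ?P \<mu>, OF p2 PP2] ab by auto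
        then show ?thesis using v0 by simp
      next
        case True
        have Kjf: "Kf ?P (Some {j,f}) = - Kf ?P (Some {i,j})"
          using K_anti[of t1 ?P "Some {j,f}", OF p1 PP1] nd unfolding t1_def by (simp add: insert_commute)
        have Kfg: "Kf ?P (Some {f,g}) = Kf ?P (Some {i,j})"
          using K_anti[of t2 ?P "Some {f,g}", OF p2 PP2] Kjf nd unfolding t2_def by (simp add: insert_commute)
        have Kgi: "Kf ?P (Some {g,i}) = - Kf ?P (Some {i,j})"
          using K_anti[of t1 ?P "Some {g,i}", OF p1 PP1] Kfg nd unfolding t1_def by (simp add: insert_commute)
        have v1: "?v (Some {i,j}) = 1" using nd by (simp add: xv_def doubleton_eq_iff)
        have v2: "?v (Some {j,f}) = -1" using nd by (simp add: xv_def doubleton_eq_iff)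
        have v3: "?v (Some {f,g}) = 1" using nd by (simp add: xv_def doubleton_eq_iff)
        have v4: "?v (Some {g,i}) = -1" using nd by (simp add: xv_def doubleton_eq_iff)
        from True consider "{a,b} = {i,j}" | "{a,b} = {j,f}" | "{a,b} = {f,g}" | "{a,b} = {g,i}" by blast
        then show ?thesis
        proof cases
          case 1 then show ?thesis using K0 v1 unfolding ab by simp
        next
          case 2 then show ?thesis using K0 Kjf v2 unfolding ab by simp
        next
          case 3 then show ?thesis using K0 Kfg v3 unfolding ab by simp
        next
          case 4 then show ?thesis using K0 Kgi v4 unfolding ab by simp
        qed
      qed
    qed
  qed
qed

end

context LS begin

lemma type4: assumes ij: "i \<in> U" "j \<in> U" "i \<noteq> j" and pq: "p \<in> W" "q \<in> W" "p \<noteq> q"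
  shows "is_eigvec n (AU n U) (\<lambda>\<mu>. xv i p \<mu> - xv i q \<mu> + xv j q \<mu> - xv j p \<mu>)
          (2 * (real m * (real n - 3) * (real n - real m) - (real n - 2)^2)
            / ((real n - 2) * (real n - 3) * (real m - 1) * (real n - real m - 1)))"
proof -
  let ?v = "\<lambda>\<mu>. xv i p \<mu> - xv i q \<mu> + xv j q \<mu> - xv j p \<mu>"
  let ?P = "\<lambda>x. x {i,p} - x {i,q} + x {j,q} - x {j,p}"
  let ?lam = "(2 * (real m * (real n - 3) * (real n - real m) - (real n - 2)^2)
            / ((real n - 2) * (real n - 3) * (real m - 1) * (real n - real m - 1)))"
  have S: "i \<in> S" "j \<in> S" "p \<in> S" "q \<in> S" using ij pq uS by auto
  have nd: "i \<noteq> j" "i \<noteq> p" "i \<noteq> q" "j \<noteq> p" "j \<noteq> q" "p \<noteq> q"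
           "j \<noteq> i" "p \<noteq> i" "q \<noteq> i" "p \<noteq> j" "q \<noteq> j" "q \<noteq> p" using ij pq by auto
  define t1 where "t1 = transpose i j"
  define t2 where "t2 = transpose p q"
  have p1: "t1 permutes S" "\<forall>z. t1 z \<in> U \<longleftrightarrow> z \<in> U" unfolding t1_def using S ij tr_pres tr_perm by auto
  have p2: "t2 permutes S" "\<forall>z. t2 z \<in> U \<longleftrightarrow> z \<in> U" unfolding t2_def using S pq tr_presW tr_perm by auto
  have PP1: "?P (act t1 x) = - ?P x" for x unfolding t1_def using nd by (simp add: act_pair insert_commute)
  have PP2: "?P (act t2 x) = - ?P x" for x unfolding t2_def using nd by (simp add: act_pair insert_commute)
  have K0: "Kf ?P (Some {i,p}) = ?lam * D"
  proof -
    have "Kf ?P (Some {i,p}) = Cw {i,p} {i,p} - Cw {i,p} {i,q} + Cw {i,p} {j,q} - Cw {p,i} {p,j}"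
      unfolding Kf_lin4 by (simp add: ins2[of i p] ins2[of j p])
    also have "\<dots> = 2 * (real m * (real n - 3) * (real n - real m) - (real n - 2)^2) * r3p"
      unfolding C1UW[OF ij(1) pq(1)] CaUWW[OF ij(1) pq] CdUWUW[OF ij(1,2,3) pq] CaWUU[OF pq(1) ij] r1_eq3 r2p_eq
      by (simp add: algebra_simps power2_eq_square)
    also have "\<dots> = ?lam * D"
    proof -
      have d: "(real n - 2) * (real n - 3) * (real m - 1) * (real n - real m - 1) \<noteq> 0" using nn mm by simp
      have "D = ((real n - 2) * (real n - 3) * (real m - 1) * (real n - real m - 1)) * r3p"
        unfolding D_eq2 by (simp add: algebra_simps)
      then show ?thesis using d by simp
    qed
    finally show ?thesis .
  qed
  show ?thesis
  proof (rule eig_conv[where P = ?P])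
    show "\<forall>\<mu>. \<mu> \<notin> basis1 n \<longrightarrow> ?v \<mu> = 0" using xv_out S nd by simp
    show "\<exists>\<mu>\<in>basis1 n. ?v \<mu> \<noteq> 0"
      by (rule bexI[of _ "Some {i,p}"]) (use nd edge_in[OF S(1,3) nd(2)] in \<open>auto simp: xv_def basis1_def doubleton_eq_iff\<close>)
    show "(\<Sum>\<nu>\<in>basis1 n. ?v \<nu> * mon \<nu> x) = ?P x" for x
      using S nd by (simp add: left_diff_distrib distrib_right sum.distrib sum_subtractf Pv_xv)
    fix \<mu> assume \<mu>: "\<mu> \<in> basis1 n"
    show "Kf ?P \<mu> = ?lam * D * ?v \<mu>"
    proof (cases "\<mu> = None")
      case True
      then show ?thesis using K_fix[of t1 ?P \<mu>, OF p1 PP1] by (simp add: xv_def)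
    next
      case False
      then obtain a b where ab: "\<mu> = Some {a,b}" "a \<in> S" "b \<in> S" "a \<noteq> b" using edge_cases[OF \<mu>] by blast
      let ?Sup = "{{i,p},{i,q},{j,q},{j,p}}"
      show ?thesis
      proof (cases "{a,b} \<in> ?Sup")
        case False
        then have v0: "?v \<mu> = 0" unfolding ab by (auto simp: xv_def)
        have "t1 ` {a,b} = {a,b} \<or> t2 ` {a,b} = {a,b}"
          using False nd unfolding t1_def t2_def by (auto simp: transpose_def)
        then have "Kf ?P \<mu> = 0"
          using K_fix[of t1 ?P \<mu>, OF p1 PP1] K_fix[of t2 ?P \<mu>, OF p2 PP2] ab by auto
        then show ?thesis using v0 by simp
      next
        case True
        have K2: "Kf ?P (Some {i,q}) = - Kf ?P (Some {i,p})"
          using K_anti[of t2 ?P "Some {i,q}", OF p2 PP2] nd unfolding t2_def by (simp add: insert_commute)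
        have K3: "Kf ?P (Some {j,q}) = Kf ?P (Some {i,p})"
          using K_anti[of t1 ?P "Some {j,q}", OF p1 PP1] K2 nd unfolding t1_def by (simp add: insert_commute)
        have K4: "Kf ?P (Some {j,p}) = - Kf ?P (Some {i,p})"
          using K_anti[of t1 ?P "Some {j,p}", OF p1 PP1] nd unfolding t1_def by (simp add: insert_commute)
        have v1: "?v (Some {i,p}) = 1" using nd by (simp add: xv_def doubleton_eq_iff)
        have v2: "?v (Some {i,q}) = -1" using nd by (simp add: xv_def doubleton_eq_iff)
        have v3: "?v (Some {j,q}) = 1" using nd by (simp add: xv_def doubleton_eq_iff)
        have v4: "?v (Some {j,p}) = -1" using nd by (simp add: xv_def doubleton_eq_iff)
        from True consider "{a,b} = {i,p}" | "{a,b} = {i,q}" | "{a,b} = {j,q}" | "{a,b} = {j,p}" by blast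
        then show ?thesis
        proof cases
          case 1 then show ?thesis using K0 v1 unfolding ab by simp
        next
          case 2 then show ?thesis using K0 K2 v2 unfolding ab by simp
        next
          case 3 then show ?thesis using K0 K3 v3 unfolding ab by simp
        next
          case 4 then show ?thesis using K0 K4 v4 unfolding ab by simp
        qed
      qed
    qed
  qed
qed

end

context LS begin

lemma split_deg: assumes ij: "i \<in> U" "j \<in> U" "i \<noteq> j"
  shows "(\<Sum>w\<in>S - {i}. g w) = g j + (\<Sum>l\<in>U - {i,j}. g l) + (\<Sum>t\<in>W. (g t :: real))"
proof -
  have e: "S - {i} = insert j ((U - {i,j}) \<union> W)" using ij Usub by (auto simp: Wmem)
  have "(\<Sum>w\<in>insert j ((U - {i,j}) \<union> W). g w) = g j + (\<Sum>w\<in>(U - {i,j}) \<union> W. g w)"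
    by (rule sum.insert) (use finU finW ij in \<open>auto simp: Wmem\<close>)
  also have "(\<Sum>w\<in>(U - {i,j}) \<union> W. g w) = (\<Sum>l\<in>U - {i,j}. g l) + (\<Sum>t\<in>W. g t)"
    by (rule sum.union_disjoint) (use finU finW in \<open>auto simp: Wmem\<close>)
  finally show ?thesis unfolding e by simp
qed

lemma QW: assumes ij: "i \<in> U" "j \<in> U" "i \<noteq> j" and x: "x \<in> X"
  shows "(\<Sum>t\<in>W. x {i,t} - x {j,t}) = - (\<Sum>l\<in>U - {i,j}. x {i,l} - x {j,l})"
proof -
  have di: "x {i,j} + (\<Sum>l\<in>U - {i,j}. x {i,l}) + (\<Sum>t\<in>W. x {i,t}) = 2"
    using deg[OF x uS[OF ij(1)]] split_deg[OF ij, of "\<lambda>w. x {i,w}"] by simp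
  have dj: "x {j,i} + (\<Sum>l\<in>U - {j,i}. x {j,l}) + (\<Sum>t\<in>W. x {j,t}) = 2"
    using deg[OF x uS[OF ij(2)]] split_deg[OF ij(2,1) ij(3)[symmetric], of "\<lambda>w. x {j,w}"] by simp
  have "{j,i} = {i,j}" by auto
  then show ?thesis using di dj by (simp add: sum_subtractf)
qed

lemma tr_img2: "l \<noteq> i \<Longrightarrow> l \<noteq> j \<Longrightarrow> transpose i j ` {i,l} = {j,l}" by auto
lemma tr_img3: "l \<noteq> i \<Longrightarrow> l \<noteq> j \<Longrightarrow> transpose i j ` {j,l} = {i,l}" by auto

lemma type5: assumes ij: "i \<in> U" "j \<in> U" "i \<noteq> j"
  shows "is_eigvec n (AU n U)
          (\<lambda>\<mu>. (\<Sum>l\<in>U - {i, j}. (real n - real m) / (real m - 2) * xv i l \<mu>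
                                  - (real n - real m) / (real m - 2) * xv j l \<mu>)
              + (\<Sum>t\<in>W. - xv i t \<mu> + xv j t \<mu>))
          (2 * (real m - 2) / ((real n - 3) * (real m - 1)))"
proof -
  define c where "c = (real n - real m) / (real m - 2)"
  let ?v = "\<lambda>\<mu>. (\<Sum>l\<in>U - {i, j}. c * xv i l \<mu> - c * xv j l \<mu>) + (\<Sum>t\<in>W. - xv i t \<mu> + xv j t \<mu>)"
  let ?P = "\<lambda>x. (\<Sum>l\<in>U - {i, j}. c * x {i,l} - c * x {j,l}) + (\<Sum>t\<in>W. - x {i,t} + x {j,t})"
  let ?Q = "\<lambda>x. (\<Sum>l\<in>U - {i, j}. x {i,l} - x {j,l})"
  let ?lam = "2 * (real m - 2) / ((real n - 3) * (real m - 1))"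
  have S: "i \<in> S" "j \<in> S" using ij uS by auto
  have c1: "c + 1 = (real n - 2) / (real m - 2)" unfolding c_def using mm by (simp add: field_simps)
  have PQ: "?P x = (c + 1) * ?Q x" if x: "x \<in> X" for x
  proof -
    have "(\<Sum>t\<in>W. - x {i,t} + x {j,t}) = - (\<Sum>t\<in>W. x {i,t} - x {j,t})" by (simp add: sum_negf[symmetric])
    also have "\<dots> = ?Q x" using QW[OF ij x] by simp
    finally show ?thesis by (simp add: sum_subtractf sum_distrib_left[symmetric] algebra_simps)
  qed
  have PW: "?P x = - (c + 1) * (\<Sum>t\<in>W. x {i,t} - x {j,t})" if x: "x \<in> X" for x
    using PQ[OF x] QW[OF ij x] by (simp add: algebra_simps)
  define t1 where "t1 = transpose i j"
  have p1: "t1 permutes S" "\<forall>z. t1 z \<in> U \<longleftrightarrow> z \<in> U" unfolding t1_def using S ij tr_pres tr_perm by auto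
  have PP1: "?P (act t1 x) = - ?P x" for x
  proof -
    have a: "(\<Sum>l\<in>U - {i, j}. c * act t1 x {i,l} - c * act t1 x {j,l}) = (\<Sum>l\<in>U - {i, j}. c * x {j,l} - c * x {i,l})"
      by (rule sum.cong) (auto simp: t1_def act_pair)
    have b: "(\<Sum>t\<in>W. - act t1 x {i,t} + act t1 x {j,t}) = (\<Sum>t\<in>W. - x {j,t} + x {i,t})"
      by (rule sum.cong) (use ij in \<open>auto simp: t1_def act_pair transpose_def\<close>)
    show ?thesis unfolding a b by (simp add: sum_subtractf sum.distrib sum_negf)
  qed
  have KU: "Kf ?P (Some {i,y}) = ?lam * D * c" if y: "y \<in> U - {i,j}" for y
  proof -
    have yU: "y \<in> U" "y \<noteq> i" "y \<noteq> j" "i \<noteq> y" "j \<noteq> y" using y by auto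
    have cd: "card (U - {i,j} - {y}) = m - 3" using y ij finU by (simp add: card_Diff_subset)
    have "Kf ?P (Some {i,y}) = (\<Sum>x\<in>X. (c + 1) * (\<Sum>l\<in>U - {i,j}. cutval n U x * x {i,y} * x {i,l} - cutval n U x * x {i,y} * x {j,l}))"
      unfolding Kf_def by (rule sum.cong[OF refl], simp only: mon.simps PQ, simp add: sum_distrib_left algebra_simps sum_subtractf)
    also have "\<dots> = (c + 1) * (\<Sum>l\<in>U - {i,j}. Cw {i,y} {i,l} - Cw {i,y} {j,l})"
      unfolding Cw_def by (simp add: sum_distrib_left[symmetric] sum_subtractf sum.swap[of _ X])
    also have "(\<Sum>l\<in>U - {i,j}. Cw {i,y} {i,l} - Cw {i,y} {j,l}) = (Cw {i,y} {i,y} - Cw {i,y} {j,y})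
        + (\<Sum>l\<in>U - {i,j} - {y}. Cw {i,y} {i,l} - Cw {i,y} {j,l})"
      by (rule sum_rem1) (use y finU in auto)
    also have "Cw {i,y} {j,y} = Cw {y,i} {y,j}" by (simp add: ins2[of i y] ins2[of j y])
    also have "(\<Sum>l\<in>U - {i,j} - {y}. Cw {i,y} {i,l} - Cw {i,y} {j,l}) = (\<Sum>l\<in>U - {i,j} - {y}. 
         (2 * (real n - real m) * r3p + 2 * (real m - 3) * (real n - real m) * r3p - 2 * r2p)
       - (4 * (real n - real m) * (2 * r3p) + (real m - 4) * (real n - real m) * (4 * r3p) - 4 * r2p))"
    proof (rule sum.cong[OF refl])
      fix l assume l: "l \<in> U - {i,j} - {y}"
      show "Cw {i,y} {i,l} - Cw {i,y} {j,l} = (2 * (real n - real m) * r3p + 2 * (real m - 3) * (real n - real m) * r3p - 2 * r2p)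
       - (4 * (real n - real m) * (2 * r3p) + (real m - 4) * (real n - real m) * (4 * r3p) - 4 * r2p)"
        using CaUUU[of y l i] CdUUUU[of i y j l] l yU ij by auto
    qed
    finally have "Kf ?P (Some {i,y}) = (c + 1) * ((Cw {i,y} {i,y} - Cw {y,i} {y,j}) + real (m - 3) * (
         (2 * (real n - real m) * r3p + 2 * (real m - 3) * (real n - real m) * r3p - 2 * r2p)
       - (4 * (real n - real m) * (2 * r3p) + (real m - 4) * (real n - real m) * (4 * r3p) - 4 * r2p)))" using cd by simp
    also have "\<dots> = (c + 1) * (2 * (real m - 2) * (real n - real m) * r3p * (real n - real m - 1))"
      unfolding C1UU[OF ij(1) yU(1) yU(4)] CaUUU[OF ij(1,2) yU(1) ij(3) yU(4,5)] r1_eq3 r2p_eq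
      using m3 by (simp add: of_nat_diff algebra_simps)
    also have "\<dots> = ?lam * D * c"
    proof -
      have d: "(real n - 3) * (real m - 1) \<noteq> 0" using nn mm by simp
      have "D = ((real n - 3) * (real m - 1)) * ((real n - 2) * r3p * (real n - real m - 1))"
        unfolding D_eq2 by (simp add: algebra_simps)
      then have "?lam * D = 2 * (real m - 2) * ((real n - 2) * r3p * (real n - real m - 1))" using d by simp
      then have e: "?lam * D * c = 2 * (real m - 2) * ((real n - 2) * r3p * (real n - real m - 1)) * c" by simp
      have "(c + 1) * (2 * (real m - 2) * (real n - real m) * r3p * (real n - real m - 1))
          = 2 * (real m - 2) * ((real n - 2) * r3p * (real n - real m - 1)) * c"
        unfolding c1 c_def using mm by (simp add: field_simps)
      then show ?thesis using e by simp
    qed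
    finally show ?thesis .
  qed
  have KW: "Kf ?P (Some {i,y}) = - (?lam * D)" if y: "y \<in> W" for y
  proof -
    have yW: "y \<in> W" "y \<noteq> i" "y \<noteq> j" "i \<noteq> y" "j \<noteq> y" using y ij by (auto simp: Wmem)
    have cd: "card (W - {y}) = n - m - 1" using y finW cardW by simp
    have "Kf ?P (Some {i,y}) = (\<Sum>x\<in>X. - (c + 1) * (\<Sum>t\<in>W. cutval n U x * x {i,y} * x {i,t} - cutval n U x * x {i,y} * x {j,t}))"
      unfolding Kf_def by (rule sum.cong[OF refl], simp only: mon.simps PW, simp add: sum_distrib_left algebra_simps sum_subtractf)
    also have "\<dots> = - (c + 1) * (\<Sum>t\<in>W. Cw {i,y} {i,t} - Cw {i,y} {j,t})"
      unfolding Cw_def by (simp add: sum_distrib_left[symmetric] sum_subtractf sum.swap[of _ X])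
    also have "(\<Sum>t\<in>W. Cw {i,y} {i,t} - Cw {i,y} {j,t}) = (Cw {i,y} {i,y} - Cw {i,y} {j,y})
        + (\<Sum>t\<in>W - {y}. Cw {i,y} {i,t} - Cw {i,y} {j,t})"
      by (rule sum_rem1) (use y finW in auto)
    also have "Cw {i,y} {j,y} = Cw {y,i} {y,j}" by (simp add: ins2[of i y] ins2[of j y])
    also have "(\<Sum>t\<in>W - {y}. Cw {i,y} {i,t} - Cw {i,y} {j,t}) = (\<Sum>t\<in>W - {y}.
         (2 * r2p + (real m - 1) * (2 * r3p + (real n - real m - 2) * (2 * r3p)) - 2 * r2p)
       - (2 * (2 * r2p + r3p + (real n - real m - 2) * (2 * r3p))
     + (real m - 2) * (2 * (2 * r3p) + (real n - real m - 2) * (4 * r3p)) - 4 * r2p))"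
    proof (rule sum.cong[OF refl])
      fix t assume t: "t \<in> W - {y}"
      show "Cw {i,y} {i,t} - Cw {i,y} {j,t} = (2 * r2p + (real m - 1) * (2 * r3p + (real n - real m - 2) * (2 * r3p)) - 2 * r2p)
       - (2 * (2 * r2p + r3p + (real n - real m - 2) * (2 * r3p))
     + (real m - 2) * (2 * (2 * r3p) + (real n - real m - 2) * (4 * r3p)) - 4 * r2p)"
        using CaUWW[of i y t] CdUWUW[of i j y t] t yW ij by auto
    qed
    finally have "Kf ?P (Some {i,y}) = - (c + 1) * ((Cw {i,y} {i,y} - Cw {y,i} {y,j}) + real (n - m - 1) * (
         (2 * r2p + (real m - 1) * (2 * r3p + (real n - real m - 2) * (2 * r3p)) - 2 * r2p)
       - (2 * (2 * r2p + r3p + (real n - real m - 2) * (2 * r3p))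
     + (real m - 2) * (2 * (2 * r3p) + (real n - real m - 2) * (4 * r3p)) - 4 * r2p)))" using cd by simp
    also have "\<dots> = - (c + 1) * (2 * (real m - 2) * (real m - 2) * r3p * (real n - real m - 1))"
      unfolding C1UW[OF ij(1) yW(1)] CaWUU[OF yW(1) ij] r1_eq3 r2p_eq
      using w3 by (simp add: of_nat_diff algebra_simps)
    also have "\<dots> = - (?lam * D)"
    proof -
      have d: "(real n - 3) * (real m - 1) \<noteq> 0" using nn mm by simp
      have "D = ((real n - 3) * (real m - 1)) * ((real n - 2) * r3p * (real n - real m - 1))"
        unfolding D_eq2 by (simp add: algebra_simps)
      then have e: "?lam * D = 2 * (real m - 2) * ((real n - 2) * r3p * (real n - real m - 1))" using d by simp
      have "- (c + 1) * (2 * (real m - 2) * (real m - 2) * r3p * (real n - real m - 1))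
          = - (2 * (real m - 2) * ((real n - 2) * r3p * (real n - real m - 1)))"
        unfolding c1 using mm by (simp add: field_simps)
      then show ?thesis using e by simp
    qed
    finally show ?thesis .
  qed
  have vU: "?v (Some {i,y}) = c" if y: "y \<in> U - {i,j}" for y
  proof -
    have a: "(\<Sum>l\<in>U - {i, j}. c * xv i l (Some {i,y}) - c * xv j l (Some {i,y})) = (\<Sum>l\<in>U - {i, j}. if l = y then c else 0)"
      by (rule sum.cong) (use y ij in \<open>auto simp: xv_def doubleton_eq_iff\<close>)
    have b: "(\<Sum>t\<in>W. - xv i t (Some {i,y}) + xv j t (Some {i,y})) = 0"
      by (rule sum.neutral) (use y ij in \<open>auto simp: xv_def doubleton_eq_iff\<close>)
    show ?thesis unfolding a b using y finU by simp
  qed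
  have vW: "?v (Some {i,y}) = -1" if y: "y \<in> W" for y
  proof -
    have a: "(\<Sum>l\<in>U - {i, j}. c * xv i l (Some {i,y}) - c * xv j l (Some {i,y})) = 0"
      by (rule sum.neutral) (use y ij in \<open>auto simp: xv_def doubleton_eq_iff\<close>)
    have b: "(\<Sum>t\<in>W. - xv i t (Some {i,y}) + xv j t (Some {i,y})) = (\<Sum>t\<in>W. if t = y then -1 else 0)"
      by (rule sum.cong) (use y ij in \<open>auto simp: xv_def doubleton_eq_iff\<close>)
    show ?thesis unfolding a b using y finW by simp
  qed
  have vU': "?v (Some {j,y}) = - c" if y: "y \<in> U - {i,j}" for y
  proof -
    have a: "(\<Sum>l\<in>U - {i, j}. c * xv i l (Some {j,y}) - c * xv j l (Some {j,y})) = (\<Sum>l\<in>U - {i, j}. if l = y then - c else 0)"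
      by (rule sum.cong) (use y ij in \<open>auto simp: xv_def doubleton_eq_iff\<close>)
    have b: "(\<Sum>t\<in>W. - xv i t (Some {j,y}) + xv j t (Some {j,y})) = 0"
      by (rule sum.neutral) (use y ij in \<open>auto simp: xv_def doubleton_eq_iff\<close>)
    show ?thesis unfolding a b using y finU by simp
  qed
  have vW': "?v (Some {j,y}) = 1" if y: "y \<in> W" for y
  proof -
    have a: "(\<Sum>l\<in>U - {i, j}. c * xv i l (Some {j,y}) - c * xv j l (Some {j,y})) = 0"
      by (rule sum.neutral) (use y ij in \<open>auto simp: xv_def doubleton_eq_iff\<close>)
    have b: "(\<Sum>t\<in>W. - xv i t (Some {j,y}) + xv j t (Some {j,y})) = (\<Sum>t\<in>W. if t = y then 1 else 0)"
      by (rule sum.cong) (use y ij in \<open>auto simp: xv_def doubleton_eq_iff\<close>)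
    show ?thesis unfolding a b using y finW by simp
  qed
  have Kj: "Kf ?P (Some {j,y}) = - Kf ?P (Some {i,y})" if y: "y \<noteq> i" "y \<noteq> j" for y
  proof -
    have e: "map_option ((`) t1) (Some {j,y}) = Some {i,y}" unfolding t1_def using y tr_img3[of y i j] by simp
    show ?thesis using K_anti[of t1 ?P "Some {j,y}", OF p1 PP1] unfolding e .
  qed
  have "card W \<noteq> 0" using cardW w3 by simp
  then have "W \<noteq> {}" by (metis card.empty)
  then obtain w0 where w0: "w0 \<in> W" by blast
  have main: "is_eigvec n (AU n U) ?v ?lam"
  proof (rule eig_conv[where P = ?P])
    show "\<forall>\<mu>. \<mu> \<notin> basis1 n \<longrightarrow> ?v \<mu> = 0"
    proof (intro allI impI)
      fix \<mu> assume \<mu>: "\<mu> \<notin> basis1 n"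
      have a: "\<forall>l\<in>U - {i,j}. xv i l \<mu> = 0 \<and> xv j l \<mu> = 0" using xv_out[OF _ _ _ \<mu>] uS ij by auto
      have b: "\<forall>t\<in>W. xv i t \<mu> = 0 \<and> xv j t \<mu> = 0"
      proof
        fix t assume t: "t \<in> W"
        have "i \<noteq> t" "j \<noteq> t" "t \<in> S" using t ij by (auto simp: Wmem)
        then show "xv i t \<mu> = 0 \<and> xv j t \<mu> = 0" using xv_out[OF _ _ _ \<mu>] S by auto
      qed
      show "?v \<mu> = 0" using a b by simp
    qed
    show "\<exists>\<mu>\<in>basis1 n. ?v \<mu> \<noteq> 0"
      by (rule bexI[of _ "Some {i,w0}"]) (use vW[OF w0] edge_in[of i w0] S w0 ij in \<open>auto simp: basis1_def Wmem\<close>)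
    show "(\<Sum>\<nu>\<in>basis1 n. ?v \<nu> * mon \<nu> x) = ?P x" for x
    proof -
      have "(\<Sum>\<nu>\<in>basis1 n. ?v \<nu> * mon \<nu> x) =
          (\<Sum>l\<in>U - {i, j}. c * (\<Sum>\<nu>\<in>basis1 n. xv i l \<nu> * mon \<nu> x) - c * (\<Sum>\<nu>\<in>basis1 n. xv j l \<nu> * mon \<nu> x))
          + (\<Sum>t\<in>W. - (\<Sum>\<nu>\<in>basis1 n. xv i t \<nu> * mon \<nu> x) + (\<Sum>\<nu>\<in>basis1 n. xv j t \<nu> * mon \<nu> x))"
        by (simp add: distrib_right sum_distrib_right left_diff_distrib sum.distrib sum_subtractf sum_negf
            sum_distrib_left sum.swap[of _ "basis1 n"] mult.assoc)
      also have "\<dots> = ?P x"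
      proof -
        have a: "(\<Sum>l\<in>U - {i, j}. c * (\<Sum>\<nu>\<in>basis1 n. xv i l \<nu> * mon \<nu> x) - c * (\<Sum>\<nu>\<in>basis1 n. xv j l \<nu> * mon \<nu> x))
           = (\<Sum>l\<in>U - {i, j}. c * x {i,l} - c * x {j,l})"
          by (rule sum.cong[OF refl]) (use ij uS in \<open>auto simp: Pv_xv\<close>)
        have b: "(\<Sum>t\<in>W. - (\<Sum>\<nu>\<in>basis1 n. xv i t \<nu> * mon \<nu> x) + (\<Sum>\<nu>\<in>basis1 n. xv j t \<nu> * mon \<nu> x))
           = (\<Sum>t\<in>W. - x {i,t} + x {j,t})"
        proof (rule sum.cong[OF refl])
          fix t assume t: "t \<in> W"
          have "i \<noteq> t" "j \<noteq> t" "t \<in> S" using t ij by (auto simp: Wmem)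
          then show "- (\<Sum>\<nu>\<in>basis1 n. xv i t \<nu> * mon \<nu> x) + (\<Sum>\<nu>\<in>basis1 n. xv j t \<nu> * mon \<nu> x) = - x {i,t} + x {j,t}"
            using S by (simp add: Pv_xv)
        qed
        show ?thesis unfolding a b ..
      qed
      finally show ?thesis .
    qed
    fix \<mu> assume \<mu>: "\<mu> \<in> basis1 n"
    show "Kf ?P \<mu> = ?lam * D * ?v \<mu>"
    proof (cases "\<mu> = None")
      case True
      then show ?thesis using K_fix[of t1 ?P \<mu>, OF p1 PP1] by (simp add: xv_def)
    next
      case False
      then obtain a b where ab: "\<mu> = Some {a,b}" "a \<in> S" "b \<in> S" "a \<noteq> b" using edge_cases[OF \<mu>] by blast
      show ?thesis
      proof (cases "t1 ` {a,b} = {a,b}")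
        case True
        then have K: "Kf ?P \<mu> = 0" using K_fix[of t1 ?P \<mu>, OF p1 PP1] ab by simp
        have z1: "\<forall>l\<in>U - {i,j}. xv i l \<mu> = 0 \<and> xv j l \<mu> = 0"
        proof
          fix l assume l: "l \<in> U - {i,j}"
          have "{a,b} \<noteq> {i,l}" using True tr_img2[of l i j] l ij unfolding t1_def by (auto simp: doubleton_eq_iff)
          moreover have "{a,b} \<noteq> {j,l}" using True tr_img3[of l i j] l ij unfolding t1_def by (auto simp: doubleton_eq_iff)
          ultimately show "xv i l \<mu> = 0 \<and> xv j l \<mu> = 0" unfolding ab xv_def by auto
        qed
        have z2: "\<forall>l\<in>W. xv i l \<mu> = 0 \<and> xv j l \<mu> = 0"
        proof
          fix l assume l: "l \<in> W"
          have l': "l \<noteq> i" "l \<noteq> j" using l ij by (auto simp: Wmem)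
          have "{a,b} \<noteq> {i,l}" using True tr_img2[of l i j] l' ij unfolding t1_def by (auto simp: doubleton_eq_iff)
          moreover have "{a,b} \<noteq> {j,l}" using True tr_img3[of l i j] l' ij unfolding t1_def by (auto simp: doubleton_eq_iff)
          ultimately show "xv i l \<mu> = 0 \<and> xv j l \<mu> = 0" unfolding ab xv_def by auto
        qed
        show ?thesis using K z1 z2 by simp
      next
        case False
        have "\<exists>y. y \<in> S \<and> y \<noteq> i \<and> y \<noteq> j \<and> ({a,b} = {i,y} \<or> {a,b} = {j,y})"
        proof (cases "a \<in> {i,j}")
          case True
          then have "b \<notin> {i,j}" using False ab(4) unfolding t1_def by (auto simp: ins2)
          then show ?thesis using True ab by auto
        next
          case nai: False
          then have "b \<in> {i,j}" using False unfolding t1_def by auto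
          then show ?thesis using nai ab by (auto simp: ins2)
        qed
        then obtain y where y: "y \<in> S" "y \<noteq> i" "y \<noteq> j" "{a,b} = {i,y} \<or> {a,b} = {j,y}" by blast
        show ?thesis
        proof (cases "y \<in> U")
          case True
          then have yU: "y \<in> U - {i,j}" using y by auto
          show ?thesis using y(4)
          proof
            assume e: "{a,b} = {i,y}"
            show ?thesis unfolding ab e using KU[OF yU] vU[OF yU] by simp
          next
            assume e: "{a,b} = {j,y}"
            show ?thesis unfolding ab e using KU[OF yU] vU'[OF yU] Kj[OF y(2,3)] by simp
          qed
        next
          case False
          then have yW: "y \<in> W" using y by (auto simp: Wmem)
          show ?thesis using y(4)
          proof
            assume e: "{a,b} = {i,y}"
            show ?thesis unfolding ab e using KW[OF yW] vW[OF yW] by simp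
          next
            assume e: "{a,b} = {j,y}"
            show ?thesis unfolding ab e using KW[OF yW] vW'[OF yW] Kj[OF y(2,3)] by simp
          qed
        qed
      qed
    qed
  qed
  then show ?thesis unfolding c_def .
qed

end

lemma cut_sym: assumes "U \<subseteq> {1..n}" shows "cutval n ({1..n} - U) = cutval n U"
proof
  fix x :: "nat set \<Rightarrow> real"
  have e: "{1..n} - ({1..n} - U) = U" using assms by auto
  have "(\<Sum>u\<in>{1..n} - U. \<Sum>v\<in>U. x {u, v}) = (\<Sum>v\<in>U. \<Sum>u\<in>{1..n} - U. x {v, u})"
    by (subst sum.swap) (simp add: insert_commute)
  then show "cutval n ({1..n} - U) x = cutval n U x" unfolding cutval_def e by simp
qed

lemma AU_sym: assumes "U \<subseteq> {1..n}" shows "AU n ({1..n} - U) = AU n U"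
  unfolding AU_def hU_def cut_sym[OF assms] ..

theorem lemma3:
  fixes n m :: nat and U :: "nat set"
  assumes "n \<ge> 6" and "U \<subseteq> {1..n}" and "card U = m" and "3 \<le> m" and "2 * m \<le> n"
  shows
    "(\<forall>i\<in>{1..n}. is_eigvec n (AU n U)
        (\<lambda>\<mu>. 2 * one_v \<mu> - (\<Sum>j\<in>{1..n} - {i}. xv i j \<mu>)) 0)
   \<and> (\<forall>i\<in>U. \<forall>j\<in>U. \<forall>f\<in>U. \<forall>g\<in>U. distinct [i, j, f, g] \<longrightarrow>
        is_eigvec n (AU n U) (\<lambda>\<mu>. xv i j \<mu> - xv j f \<mu> + xv f g \<mu> - xv g i \<mu>)
          (2 * (real m - 2) / ((real n - 2) * (real m - 1))))
   \<and> (\<forall>p\<in>{1..n} - U. \<forall>q\<in>{1..n} - U. \<forall>r\<in>{1..n} - U. \<forall>s\<in>{1..n} - U. distinct [p, q, r, s] \<longrightarrow>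
        is_eigvec n (AU n U) (\<lambda>\<mu>. xv p q \<mu> - xv q r \<mu> + xv r s \<mu> - xv s p \<mu>)
          (2 * (real n - real m - 2) / ((real n - 2) * (real n - real m - 1))))
   \<and> (\<forall>i\<in>U. \<forall>j\<in>U. \<forall>p\<in>{1..n} - U. \<forall>q\<in>{1..n} - U. i \<noteq> j \<and> p \<noteq> q \<longrightarrow>
        is_eigvec n (AU n U) (\<lambda>\<mu>. xv i p \<mu> - xv i q \<mu> + xv j q \<mu> - xv j p \<mu>)
          (2 * (real m * (real n - 3) * (real n - real m) - (real n - 2)^2)
            / ((real n - 2) * (real n - 3) * (real m - 1) * (real n - real m - 1))))
   \<and> (\<forall>i\<in>U. \<forall>j\<in>U. i \<noteq> j \<longrightarrow>
        is_eigvec n (AU n U)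
          (\<lambda>\<mu>. (\<Sum>l\<in>U - {i, j}. (real n - real m) / (real m - 2) * xv i l \<mu>
                                  - (real n - real m) / (real m - 2) * xv j l \<mu>)
              + (\<Sum>t\<in>{1..n} - U. - xv i t \<mu> + xv j t \<mu>))
          (2 * (real m - 2) / ((real n - 3) * (real m - 1))))
   \<and> (\<forall>p\<in>{1..n} - U. \<forall>q\<in>{1..n} - U. p \<noteq> q \<longrightarrow>
        is_eigvec n (AU n U)
          (\<lambda>\<mu>. (\<Sum>t\<in>{1..n} - U - {p, q}. real m / (real n - real m - 2) * xv p t \<mu>
                                  - real m / (real n - real m - 2) * xv q t \<mu>)
              + (\<Sum>l\<in>U. - xv p l \<mu> + xv q l \<mu>))
          (2 * (real n - real m - 2) / ((real n - 3) * (real n - real m - 1))))"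
proof -
  interpret A: LS n U
    by unfold_locales (use assms in auto)
  have finU: "finite U" using assms(2) finite_subset by blast
  have cW: "card ({1..n} - U) = n - m" using assms(2,3) finU by (simp add: card_Diff_subset)
  have rW: "real (card ({1..n} - U)) = real n - real m" using cW assms by (simp add: of_nat_diff)
  interpret B: LS n "{1..n} - U"
    by unfold_locales (use assms cW in auto)
  have AW: "AU n ({1..n} - U) = AU n U" by (rule AU_sym[OF assms(2)])
  have WA: "A.W = {1..n} - U" unfolding A.W_def ..
  have WB: "B.W = U" unfolding B.W_def using assms(2) by auto
  have mA: "card U = m" by fact
  show ?thesis
  proof (intro conjI)
    show "\<forall>i\<in>{1..n}. is_eigvec n (AU n U) (\<lambda>\<mu>. 2 * one_v \<mu> - (\<Sum>j\<in>{1..n} - {i}. xv i j \<mu>)) 0"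
      using A.type1 by blast
    show "\<forall>i\<in>U. \<forall>j\<in>U. \<forall>f\<in>U. \<forall>g\<in>U. distinct [i, j, f, g] \<longrightarrow>
        is_eigvec n (AU n U) (\<lambda>\<mu>. xv i j \<mu> - xv j f \<mu> + xv f g \<mu> - xv g i \<mu>)
          (2 * (real m - 2) / ((real n - 2) * (real m - 1)))"
      using A.type2 mA by blast
    show "\<forall>p\<in>{1..n} - U. \<forall>q\<in>{1..n} - U. \<forall>r\<in>{1..n} - U. \<forall>s\<in>{1..n} - U. distinct [p, q, r, s] \<longrightarrow>
        is_eigvec n (AU n U) (\<lambda>\<mu>. xv p q \<mu> - xv q r \<mu> + xv r s \<mu> - xv s p \<mu>)
          (2 * (real n - real m - 2) / ((real n - 2) * (real n - real m - 1)))"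
      using B.type2 unfolding AW rW by (simp add: algebra_simps)
    show "\<forall>i\<in>U. \<forall>j\<in>U. \<forall>p\<in>{1..n} - U. \<forall>q\<in>{1..n} - U. i \<noteq> j \<and> p \<noteq> q \<longrightarrow>
        is_eigvec n (AU n U) (\<lambda>\<mu>. xv i p \<mu> - xv i q \<mu> + xv j q \<mu> - xv j p \<mu>)
          (2 * (real m * (real n - 3) * (real n - real m) - (real n - 2)^2)
            / ((real n - 2) * (real n - 3) * (real m - 1) * (real n - real m - 1)))"
      using A.type4 unfolding WA mA by blast
    show "\<forall>i\<in>U. \<forall>j\<in>U. i \<noteq> j \<longrightarrow>
        is_eigvec n (AU n U)
          (\<lambda>\<mu>. (\<Sum>l\<in>U - {i, j}. (real n - real m) / (real m - 2) * xv i l \<mu>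
                                  - (real n - real m) / (real m - 2) * xv j l \<mu>)
              + (\<Sum>t\<in>{1..n} - U. - xv i t \<mu> + xv j t \<mu>))
          (2 * (real m - 2) / ((real n - 3) * (real m - 1)))"
      using A.type5 unfolding WA mA by blast
    show "\<forall>p\<in>{1..n} - U. \<forall>q\<in>{1..n} - U. p \<noteq> q \<longrightarrow>
        is_eigvec n (AU n U)
          (\<lambda>\<mu>. (\<Sum>t\<in>{1..n} - U - {p, q}. real m / (real n - real m - 2) * xv p t \<mu>
                                  - real m / (real n - real m - 2) * xv q t \<mu>)
              + (\<Sum>l\<in>U. - xv p l \<mu> + xv q l \<mu>))
          (2 * (real n - real m - 2) / ((real n - 3) * (real n - real m - 1)))"
    proof (intro ballI impI)
      fix p q assume p: "p \<in> {1..n} - U" and q: "q \<in> {1..n} - U" and pq: "p \<noteq> q"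
      have e1: "real n - real (card ({1..n} - U)) = real m" using rW by simp
      have e2: "real (card ({1..n} - U)) - 2 = real n - real m - 2" using rW by simp
      have e3: "real (card ({1..n} - U)) - 1 = real n - real m - 1" using rW by simp
      show "is_eigvec n (AU n U)
          (\<lambda>\<mu>. (\<Sum>t\<in>{1..n} - U - {p, q}. real m / (real n - real m - 2) * xv p t \<mu>
                                  - real m / (real n - real m - 2) * xv q t \<mu>)
              + (\<Sum>l\<in>U. - xv p l \<mu> + xv q l \<mu>))
          (2 * (real n - real m - 2) / ((real n - 3) * (real n - real m - 1)))"
        using B.type5[OF p q pq] unfolding AW WB e1 e2 e3 .
    qed
  qed
qed

end
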